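(* Let $H=(H,\Delta,\epsilon,\phi,S,\alpha,\beta)$ be a quasi-Hopf algebra over a field $k$ (not necessarily finite-dimensional), and let $\nu\colon H\to Q$ be a surjective morphism of quasibialgebras onto a finite-dimensional quasibialgebra $Q$. Then $S(\ker\nu)\subseteq\ker\nu$. Consequently $S$ induces an anti-algebra endomorphism $\overline S$ of $Q$ with $\overline S\circ\nu=\nu\circ S$, the triple $(\overline S,\nu(\alpha),\nu(\beta))$ is a quasi-antipode for $Q$, and $\nu$ is a morphism of quasi-Hopf algebras; i.e. $Q$ is a quotient quasi-Hopf algebra of $H$.
   Context: A quasibialgebra $(H,\Delta,\epsilon,\phi)$ over a field $k$ consists of an algebra $H$, algebra maps $\Delta\colon H\to H\otimes H$, $h\mapsto h_{(1)}\otimes h_{(2)}$, and $\epsilon\colon H\to k$, and an invertible $\phi=\phi^{(1)}\otimes\phi^{(2)}\otimes\phi^{(3)}\in H^{\otimes 3}$ (with $\phi^{-1}=\phi^{(-1)}\otimes\phi^{(-2)}\otimes\phi^{(-3)}$) such that $(\epsilon\otimes H)\Delta(h)=h=(H\otimes\epsilon)\Delta(h)$; $(H\otimes\Delta)\Delta(h)\,\phi=\phi\,(\Delta\otimes H)\Delta(h)$; $(H\otimes H\otimes\Delta)(\phi)(\Delta\otimes H\otimes H)(\phi)=(1\otimes\phi)(H\otimes\Delta\otimes H)(\phi)(\phi\otimes 1)$; and $(H\otimes\epsilon\otimes H)(\phi)=1$. A morphism of quasibialgebras $f\colon(H,\phi)\to(L,\psi)$ is an algebra map with $\Delta f=(f\otimes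 f)\Delta$, $\epsilon f=\epsilon$, $(f\otimes f\otimes f)(\phi)=\psi$. A quasi-antipode is a triple $(S,\alpha,\beta)$ with $\alpha,\beta\in H$ and $S$ an anti-algebra endomorphism of $H$ (not required to be bijective) such that for all $h\in H$: $S(h_{(1)})\alpha h_{(2)}=\epsilon(h)\alpha$, $h_{(1)}\beta S(h_{(2)})=\epsilon(h)\beta$, $\phi^{(1)}\beta S(\phi^{(2)})\alpha\phi^{(3)}=1$, $S(\phi^{(-1)})\alpha\phi^{(-2)}\beta S(\phi^{(-3)})=1$. A quasi-Hopf algebra is a quasibialgebra with a quasi-antipode; a morphism of quasi-Hopf algebras is a quasibialgebra morphism $f$ with $S'f=fS$, $f(\alpha)=\alpha'$, $f(\beta)=\beta'$. *)

theory Defs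
  imports Complex_Main
begin

text \<open>
An algebra over a field k is a type 'h of class ring_1 together with a
scalar multiplication sc :: 'k => 'h => 'h making it a k-module such that the product
is k-bilinear.  Elements of tensor powers of H are represented by finite formal sums
of pure tensors (lists of pairs / triples / quadruples).  Two such formal sums are
identified (as elements of the tensor product over k) iff every k-multilinear form
takes the same value on them; this is the usual universal property of the tensor
product tested against the target k (tensor products of vector spaces are separated
by the multilinear forms).
\<close>

definition klin :: "('k::field \<Rightarrow> 'a::ab_group_add \<Rightarrow> 'a) \<Rightarrow> ('k \<Rightarrow> 'b::ab_group_add \<Rightarrow> 'b) \<Rightarrow> ('a \<Rightarrow> 'b) \<Rightarrow> bool" where
  "klin sa sb f \<longleftrightarrow> (\<forall>x y. f (x + y) = f x + f y) \<and> (\<forall>c x. f (sa c x) = sb c (f x))"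

definition kalgebra :: "('k::field \<Rightarrow> 'h::ring_1 \<Rightarrow> 'h) \<Rightarrow> bool" where
  "kalgebra sc \<longleftrightarrow> module sc \<and> (\<forall>c x y. sc c (x * y) = sc c x * y \<and> sc c (x * y) = x * sc c y)"

definition fin_dim :: "('k::field \<Rightarrow> 'h::ring_1 \<Rightarrow> 'h) \<Rightarrow> bool" where
  "fin_dim sc \<longleftrightarrow> (\<exists>B. finite B \<and> module.span sc B = UNIV)"

definition alg_map :: "('k::field \<Rightarrow> 'a::ring_1 \<Rightarrow> 'a) \<Rightarrow> ('k \<Rightarrow> 'b::ring_1 \<Rightarrow> 'b) \<Rightarrow> ('a \<Rightarrow> 'b) \<Rightarrow> bool" where
  "alg_map sa sb f \<longleftrightarrow> klin sa sb f \<and> (\<forall>x y. f (x * y) = f x * f y) \<and> f 1 = 1"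

definition anti_alg_map :: "('k::field \<Rightarrow> 'a::ring_1 \<Rightarrow> 'a) \<Rightarrow> ('k \<Rightarrow> 'b::ring_1 \<Rightarrow> 'b) \<Rightarrow> ('a \<Rightarrow> 'b) \<Rightarrow> bool" where
  "anti_alg_map sa sb f \<longleftrightarrow> klin sa sb f \<and> (\<forall>x y. f (x * y) = f y * f x) \<and> f 1 = 1"

definition bilin :: "('k::field \<Rightarrow> 'h::ab_group_add \<Rightarrow> 'h) \<Rightarrow> ('h \<Rightarrow> 'h \<Rightarrow> 'k) \<Rightarrow> bool" where
  "bilin sc B \<longleftrightarrow> (\<forall>y. klin sc (*) (\<lambda>x. B x y)) \<and> (\<forall>x. klin sc (*) (\<lambda>y. B x y))"

definition trilin :: "('k::field \<Rightarrow> 'h::ab_group_add \<Rightarrow> 'h) \<Rightarrow> ('h \<Rightarrow> 'h \<Rightarrow> 'h \<Rightarrow> 'k) \<Rightarrow> bool" where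
  "trilin sc T \<longleftrightarrow> (\<forall>y z. klin sc (*) (\<lambda>x. T x y z)) \<and> (\<forall>x z. klin sc (*) (\<lambda>y. T x y z))
                 \<and> (\<forall>x y. klin sc (*) (\<lambda>z. T x y z))"

definition quadlin :: "('k::field \<Rightarrow> 'h::ab_group_add \<Rightarrow> 'h) \<Rightarrow> ('h \<Rightarrow> 'h \<Rightarrow> 'h \<Rightarrow> 'h \<Rightarrow> 'k) \<Rightarrow> bool" where
  "quadlin sc F \<longleftrightarrow> (\<forall>y z w. klin sc (*) (\<lambda>x. F x y z w)) \<and> (\<forall>x z w. klin sc (*) (\<lambda>y. F x y z w))
                 \<and> (\<forall>x y w. klin sc (*) (\<lambda>z. F x y z w)) \<and> (\<forall>x y z. klin sc (*) (\<lambda>w. F x y z w))"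

definition teq2 :: "('k::field \<Rightarrow> 'h::ab_group_add \<Rightarrow> 'h) \<Rightarrow> ('h \<times> 'h) list \<Rightarrow> ('h \<times> 'h) list \<Rightarrow> bool" where
  "teq2 sc xs ys \<longleftrightarrow> (\<forall>B. bilin sc B \<longrightarrow>
      sum_list (map (\<lambda>(a, b). B a b) xs) = sum_list (map (\<lambda>(a, b). B a b) ys))"

definition teq3 :: "('k::field \<Rightarrow> 'h::ab_group_add \<Rightarrow> 'h) \<Rightarrow> ('h \<times> 'h \<times> 'h) list \<Rightarrow> ('h \<times> 'h \<times> 'h) list \<Rightarrow> bool" where
  "teq3 sc xs ys \<longleftrightarrow> (\<forall>T. trilin sc T \<longrightarrow>
      sum_list (map (\<lambda>(a, b, c). T a b c) xs) = sum_list (map (\<lambda>(a, b, c). T a b c) ys))"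

definition teq4 :: "('k::field \<Rightarrow> 'h::ab_group_add \<Rightarrow> 'h) \<Rightarrow> ('h \<times> 'h \<times> 'h \<times> 'h) list \<Rightarrow> ('h \<times> 'h \<times> 'h \<times> 'h) list \<Rightarrow> bool" where
  "teq4 sc xs ys \<longleftrightarrow> (\<forall>F. quadlin sc F \<longrightarrow>
      sum_list (map (\<lambda>(a, b, c, d). F a b c d) xs) = sum_list (map (\<lambda>(a, b, c, d). F a b c d) ys))"

definition tmul2 :: "('h::ring_1 \<times> 'h) list \<Rightarrow> ('h \<times> 'h) list \<Rightarrow> ('h \<times> 'h) list" where
  "tmul2 xs ys = concat (map (\<lambda>(a, b). map (\<lambda>(c, d). (a * c, b * d)) ys) xs)"

definition tmul3 :: "('h::ring_1 \<times> 'h \<times> 'h) list \<Rightarrow> ('h \<times> 'h \<times> 'h) list \<Rightarrow> ('h \<times> 'h \<times> 'h) list" where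
  "tmul3 xs ys = concat (map (\<lambda>(a, b, c). map (\<lambda>(a', b', c'). (a * a', b * b', c * c')) ys) xs)"

definition tmul4 :: "('h::ring_1 \<times> 'h \<times> 'h \<times> 'h) list \<Rightarrow> ('h \<times> 'h \<times> 'h \<times> 'h) list \<Rightarrow> ('h \<times> 'h \<times> 'h \<times> 'h) list" where
  "tmul4 xs ys = concat (map (\<lambda>(a, b, c, d). map (\<lambda>(a', b', c', d'). (a * a', b * b', c * c', d * d')) ys) xs)"

definition id_D :: "('h \<Rightarrow> ('h \<times> 'h) list) \<Rightarrow> ('h \<times> 'h) list \<Rightarrow> ('h \<times> 'h \<times> 'h) list" where
  "id_D D xs = concat (map (\<lambda>(a, b). map (\<lambda>(c, d). (a, c, d)) (D b)) xs)"

definition D_id :: "('h \<Rightarrow> ('h \<times> 'h) list) \<Rightarrow> ('h \<times> 'h) list \<Rightarrow> ('h \<times> 'h \<times> 'h) list" where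
  "D_id D xs = concat (map (\<lambda>(a, b). map (\<lambda>(c, d). (c, d, b)) (D a)) xs)"

definition id_id_D :: "('h \<Rightarrow> ('h \<times> 'h) list) \<Rightarrow> ('h \<times> 'h \<times> 'h) list \<Rightarrow> ('h \<times> 'h \<times> 'h \<times> 'h) list" where
  "id_id_D D xs = concat (map (\<lambda>(a, b, c). map (\<lambda>(d, e). (a, b, d, e)) (D c)) xs)"

definition id_D_id :: "('h \<Rightarrow> ('h \<times> 'h) list) \<Rightarrow> ('h \<times> 'h \<times> 'h) list \<Rightarrow> ('h \<times> 'h \<times> 'h \<times> 'h) list" where
  "id_D_id D xs = concat (map (\<lambda>(a, b, c). map (\<lambda>(d, e). (a, d, e, c)) (D b)) xs)"

definition D_id_id :: "('h \<Rightarrow> ('h \<times> 'h) list) \<Rightarrow> ('h \<times> 'h \<times> 'h) list \<Rightarrow> ('h \<times> 'h \<times> 'h \<times> 'h) list" where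
  "D_id_id D xs = concat (map (\<lambda>(a, b, c). map (\<lambda>(d, e). (d, e, b, c)) (D a)) xs)"

definition quasibialgebra ::
  "('k::field \<Rightarrow> 'h::ring_1 \<Rightarrow> 'h) \<Rightarrow> ('h \<Rightarrow> ('h \<times> 'h) list) \<Rightarrow> ('h \<Rightarrow> 'k) \<Rightarrow>
   ('h \<times> 'h \<times> 'h) list \<Rightarrow> ('h \<times> 'h \<times> 'h) list \<Rightarrow> bool" where
  "quasibialgebra sc D eps phi phii \<longleftrightarrow>
     kalgebra sc \<and>
     \<comment> \<open>\<Delta> is an algebra map H \<rightarrow> H\<otimes>H\<close>
     (\<forall>x y. teq2 sc (D (x + y)) (D x @ D y)) \<and>
     (\<forall>c x. teq2 sc (D (sc c x)) (map (\<lambda>(a, b). (sc c a, b)) (D x))) \<and>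
     (\<forall>x y. teq2 sc (D (x * y)) (tmul2 (D x) (D y))) \<and>
     teq2 sc (D 1) [(1, 1)] \<and>
     \<comment> \<open>\<epsilon> is an algebra map H \<rightarrow> k\<close>
     alg_map sc (*) eps \<and>
     \<comment> \<open>\<phi> invertible with inverse \<phi>i\<close>
     teq3 sc (tmul3 phi phii) [(1, 1, 1)] \<and> teq3 sc (tmul3 phii phi) [(1, 1, 1)] \<and>
     \<comment> \<open>counit axioms\<close>
     (\<forall>h. sum_list (map (\<lambda>(a, b). sc (eps a) b) (D h)) = h) \<and>
     (\<forall>h. sum_list (map (\<lambda>(a, b). sc (eps b) a) (D h)) = h) \<and>
     \<comment> \<open>quasi-coassociativity\<close>
     (\<forall>h. teq3 sc (tmul3 (id_D D (D h)) phi) (tmul3 phi (D_id D (D h)))) \<and>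
     \<comment> \<open>3-cocycle (pentagon) condition\<close>
     teq4 sc (tmul4 (id_id_D D phi) (D_id_id D phi))
             (tmul4 (tmul4 (map (\<lambda>(a, b, c). (1, a, b, c)) phi) (id_D_id D phi))
                    (map (\<lambda>(a, b, c). (a, b, c, 1)) phi)) \<and>
     \<comment> \<open>normalization (H\<otimes>\<epsilon>\<otimes>H)(\<phi>) = 1\<close>
     teq2 sc (map (\<lambda>(a, b, c). (sc (eps b) a, c)) phi) [(1, 1)]"

text \<open>Quasi-antipode (S, \<alpha>, \<beta>); S is an anti-algebra endomorphism (not necessarily bijective).\<close>
definition quasi_antipode ::
  "('k::field \<Rightarrow> 'h::ring_1 \<Rightarrow> 'h) \<Rightarrow> ('h \<Rightarrow> ('h \<times> 'h) list) \<Rightarrow> ('h \<Rightarrow> 'k) \<Rightarrow>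
   ('h \<times> 'h \<times> 'h) list \<Rightarrow> ('h \<times> 'h \<times> 'h) list \<Rightarrow> ('h \<Rightarrow> 'h) \<Rightarrow> 'h \<Rightarrow> 'h \<Rightarrow> bool" where
  "quasi_antipode sc D eps phi phii S \<alpha> \<beta> \<longleftrightarrow>
     anti_alg_map sc sc S \<and>
     (\<forall>h. sum_list (map (\<lambda>(a, b). S a * \<alpha> * b) (D h)) = sc (eps h) \<alpha>) \<and>
     (\<forall>h. sum_list (map (\<lambda>(a, b). a * \<beta> * S b) (D h)) = sc (eps h) \<beta>) \<and>
     sum_list (map (\<lambda>(a, b, c). a * \<beta> * S b * \<alpha> * c) phi) = 1 \<and>
     sum_list (map (\<lambda>(a, b, c). S a * \<alpha> * b * \<beta> * S c) phii) = 1"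

definition quasi_hopf ::
  "('k::field \<Rightarrow> 'h::ring_1 \<Rightarrow> 'h) \<Rightarrow> ('h \<Rightarrow> ('h \<times> 'h) list) \<Rightarrow> ('h \<Rightarrow> 'k) \<Rightarrow>
   ('h \<times> 'h \<times> 'h) list \<Rightarrow> ('h \<times> 'h \<times> 'h) list \<Rightarrow> ('h \<Rightarrow> 'h) \<Rightarrow> 'h \<Rightarrow> 'h \<Rightarrow> bool" where
  "quasi_hopf sc D eps phi phii S \<alpha> \<beta> \<longleftrightarrow>
     quasibialgebra sc D eps phi phii \<and> quasi_antipode sc D eps phi phii S \<alpha> \<beta>"

definition qba_morphism ::
  "('k::field \<Rightarrow> 'h::ring_1 \<Rightarrow> 'h) \<Rightarrow> ('h \<Rightarrow> ('h \<times> 'h) list) \<Rightarrow> ('h \<Rightarrow> 'k) \<Rightarrow> ('h \<times> 'h \<times> 'h) list \<Rightarrow>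
   ('k \<Rightarrow> 'l::ring_1 \<Rightarrow> 'l) \<Rightarrow> ('l \<Rightarrow> ('l \<times> 'l) list) \<Rightarrow> ('l \<Rightarrow> 'k) \<Rightarrow> ('l \<times> 'l \<times> 'l) list \<Rightarrow>
   ('h \<Rightarrow> 'l) \<Rightarrow> bool" where
  "qba_morphism scH DH epsH phiH scL DL epsL phiL f \<longleftrightarrow>
     alg_map scH scL f \<and>
     (\<forall>h. teq2 scL (DL (f h)) (map (\<lambda>(a, b). (f a, f b)) (DH h))) \<and>
     (\<forall>h. epsL (f h) = epsH h) \<and>
     teq3 scL (map (\<lambda>(a, b, c). (f a, f b, f c)) phiH) phiL"

definition qhopf_morphism ::
  "('k::field \<Rightarrow> 'h::ring_1 \<Rightarrow> 'h) \<Rightarrow> ('h \<Rightarrow> ('h \<times> 'h) list) \<Rightarrow> ('h \<Rightarrow> 'k) \<Rightarrow> ('h \<times> 'h \<times> 'h) list \<Rightarrow>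
   ('h \<Rightarrow> 'h) \<Rightarrow> 'h \<Rightarrow> 'h \<Rightarrow>
   ('k \<Rightarrow> 'l::ring_1 \<Rightarrow> 'l) \<Rightarrow> ('l \<Rightarrow> ('l \<times> 'l) list) \<Rightarrow> ('l \<Rightarrow> 'k) \<Rightarrow> ('l \<times> 'l \<times> 'l) list \<Rightarrow>
   ('l \<Rightarrow> 'l) \<Rightarrow> 'l \<Rightarrow> 'l \<Rightarrow> ('h \<Rightarrow> 'l) \<Rightarrow> bool" where
  "qhopf_morphism scH DH epsH phiH SH \<alpha>H \<beta>H scL DL epsL phiL SL \<alpha>L \<beta>L f \<longleftrightarrow>
     qba_morphism scH DH epsH phiH scL DL epsL phiL f \<and>
     (\<forall>h. SL (f h) = f (SH h)) \<and> f \<alpha>H = \<alpha>L \<and> f \<beta>H = \<beta>L"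

end

theory Submission
  imports Defs "HOL-Library.Function_Algebras"
begin
section \<open>Evaluation of formal tensors against forms\<close>

definition ev2 :: "('h \<times> 'h) list \<Rightarrow> ('h \<Rightarrow> 'h \<Rightarrow> 'k::comm_monoid_add) \<Rightarrow> 'k" where
  "ev2 xs B = sum_list (map (\<lambda>(a, b). B a b) xs)"
definition ev3 :: "('h \<times> 'h \<times> 'h) list \<Rightarrow> ('h \<Rightarrow> 'h \<Rightarrow> 'h \<Rightarrow> 'k::comm_monoid_add) \<Rightarrow> 'k" where
  "ev3 xs T = sum_list (map (\<lambda>(a, b, c). T a b c) xs)"
definition ev4 :: "('h \<times> 'h \<times> 'h \<times> 'h) list \<Rightarrow> ('h \<Rightarrow> 'h \<Rightarrow> 'h \<Rightarrow> 'h \<Rightarrow> 'k::comm_monoid_add) \<Rightarrow> 'k" where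
  "ev4 xs F = sum_list (map (\<lambda>(a, b, c, d). F a b c d) xs)"

lemma teq2_iff: "teq2 sc xs ys \<longleftrightarrow> (\<forall>B. bilin sc B \<longrightarrow> ev2 xs B = ev2 ys B)"
  unfolding teq2_def ev2_def ..
lemma teq3_iff: "teq3 sc xs ys \<longleftrightarrow> (\<forall>T. trilin sc T \<longrightarrow> ev3 xs T = ev3 ys T)"
  unfolding teq3_def ev3_def ..
lemma teq4_iff: "teq4 sc xs ys \<longleftrightarrow> (\<forall>F. quadlin sc F \<longrightarrow> ev4 xs F = ev4 ys F)"
  unfolding teq4_def ev4_def ..

lemma teq2D: "teq2 sc xs ys \<Longrightarrow> bilin sc B \<Longrightarrow> ev2 xs B = ev2 ys B"
  by (simp add: teq2_iff)
lemma teq3D: "teq3 sc xs ys \<Longrightarrow> trilin sc T \<Longrightarrow> ev3 xs T = ev3 ys T"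
  by (simp add: teq3_iff)
lemma teq4D: "teq4 sc xs ys \<Longrightarrow> quadlin sc F \<Longrightarrow> ev4 xs F = ev4 ys F"
  by (simp add: teq4_iff)

lemma teq2_refl[simp]: "teq2 sc xs xs" by (simp add: teq2_iff)
lemma teq3_refl[simp]: "teq3 sc xs xs" by (simp add: teq3_iff)
lemma teq4_refl[simp]: "teq4 sc xs xs" by (simp add: teq4_iff)
lemma teq2_sym: "teq2 sc xs ys \<Longrightarrow> teq2 sc ys xs" by (simp add: teq2_iff)
lemma teq3_sym: "teq3 sc xs ys \<Longrightarrow> teq3 sc ys xs" by (simp add: teq3_iff)
lemma teq4_sym: "teq4 sc xs ys \<Longrightarrow> teq4 sc ys xs" by (simp add: teq4_iff)
lemma teq2_trans[trans]: "teq2 sc xs ys \<Longrightarrow> teq2 sc ys zs \<Longrightarrow> teq2 sc xs zs" by (simp add: teq2_iff)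
lemma teq3_trans[trans]: "teq3 sc xs ys \<Longrightarrow> teq3 sc ys zs \<Longrightarrow> teq3 sc xs zs" by (simp add: teq3_iff)
lemma teq4_trans[trans]: "teq4 sc xs ys \<Longrightarrow> teq4 sc ys zs \<Longrightarrow> teq4 sc xs zs" by (simp add: teq4_iff)

lemma ev2_simps[simp]:
  "ev2 [] B = 0" "ev2 ((a, b) # xs) B = B a b + ev2 xs B" "ev2 (xs @ ys) B = ev2 xs B + ev2 ys B"
  by (simp_all add: ev2_def)
lemma ev3_simps[simp]:
  "ev3 [] T = 0" "ev3 ((a, b, c) # xs) T = T a b c + ev3 xs T" "ev3 (xs @ ys) T = ev3 xs T + ev3 ys T"
  by (simp_all add: ev3_def)
lemma ev4_simps[simp]:
  "ev4 [] F = 0" "ev4 ((a, b, c, d) # xs) F = F a b c d + ev4 xs F" "ev4 (xs @ ys) F = ev4 xs F + ev4 ys F"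
  by (simp_all add: ev4_def)

lemma ev2_concat_map: "ev2 (concat (map f xs)) B = sum_list (map (\<lambda>x. ev2 (f x) B) xs)"
  by (induct xs) auto
lemma ev3_concat_map: "ev3 (concat (map f xs)) B = sum_list (map (\<lambda>x. ev3 (f x) B) xs)"
  by (induct xs) auto
lemma ev4_concat_map: "ev4 (concat (map f xs)) B = sum_list (map (\<lambda>x. ev4 (f x) B) xs)"
  by (induct xs) auto

lemma ev2_map: "ev2 (map f xs) B = sum_list (map (\<lambda>x. case f x of (a, b) \<Rightarrow> B a b) xs)"
  by (simp add: ev2_def comp_def)
lemma ev3_map: "ev3 (map f xs) B = sum_list (map (\<lambda>x. case f x of (a, b, c) \<Rightarrow> B a b c) xs)"
  by (simp add: ev3_def comp_def)
lemma ev4_map: "ev4 (map f xs) B = sum_list (map (\<lambda>x. case f x of (a, b, c, d) \<Rightarrow> B a b c d) xs)"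
  by (simp add: ev4_def comp_def)

lemma ev2_add_form: "ev2 xs (\<lambda>a b. B a b + C a b) = ev2 xs B + ev2 xs C"
  by (induct xs) (auto simp: algebra_simps)
lemma ev3_add_form: "ev3 xs (\<lambda>a b c. B a b c + C a b c) = ev3 xs B + ev3 xs C"
  by (induct xs) (auto simp: algebra_simps)
lemma ev4_add_form: "ev4 xs (\<lambda>a b c d. B a b c d + C a b c d) = ev4 xs B + ev4 xs C"
  by (induct xs) (auto simp: algebra_simps)
lemma ev2_mult_form: "ev2 xs (\<lambda>a b. (c::'k::comm_semiring_0) * B a b) = c * ev2 xs B"
  by (induct xs) (auto simp: algebra_simps)
lemma ev3_mult_form: "ev3 xs (\<lambda>a b d. (c::'k::comm_semiring_0) * B a b d) = c * ev3 xs B"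
  by (induct xs) (auto simp: algebra_simps)
lemma ev4_mult_form: "ev4 xs (\<lambda>a b d e. (c::'k::comm_semiring_0) * B a b d e) = c * ev4 xs B"
  by (induct xs) (auto simp: algebra_simps)

lemma ev2_cong: "(\<And>a b. (a, b) \<in> set xs \<Longrightarrow> B a b = C a b) \<Longrightarrow> ev2 xs B = ev2 xs C"
  by (induct xs) auto
lemma ev3_cong: "(\<And>a b c. (a, b, c) \<in> set xs \<Longrightarrow> B a b c = C a b c) \<Longrightarrow> ev3 xs B = ev3 xs C"
  by (induct xs) auto
lemma ev4_cong: "(\<And>a b c d. (a, b, c, d) \<in> set xs \<Longrightarrow> B a b c d = C a b c d) \<Longrightarrow> ev4 xs B = ev4 xs C"
  by (induct xs) auto

lemma sum_list_swap:
  fixes f :: "'a \<Rightarrow> 'b \<Rightarrow> 'c::comm_monoid_add"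
  shows "sum_list (map (\<lambda>x. sum_list (map (\<lambda>y. f x y) ys)) xs) =
   sum_list (map (\<lambda>y. sum_list (map (\<lambda>x. f x y) xs)) ys)"
  by (induct xs) (auto simp: sum_list_addf)

lemma klinI: "(\<And>x y. f (x + y) = f x + f y) \<Longrightarrow> (\<And>c x. f (sa c x) = sb c (f x)) \<Longrightarrow> klin sa sb f"
  by (simp add: klin_def)
lemma klin_add: "klin sa sb f \<Longrightarrow> f (x + y) = f x + f y" by (simp add: klin_def)
lemma klin_sc: "klin sa sb f \<Longrightarrow> f (sa c x) = sb c (f x)" by (simp add: klin_def)

lemma bilinI:
  assumes "\<And>x x' y. B (x + x') y = B x y + B x' y" "\<And>c x y. B (sc c x) y = c * B x y"
    "\<And>x y y'. B x (y + y') = B x y + B x y'" "\<And>c x y. B x (sc c y) = c * B x y"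
  shows "bilin sc B"
  using assms by (simp add: bilin_def klin_def)
lemma bilin_add1: "bilin sc B \<Longrightarrow> B (x + x') y = B x y + B x' y" by (simp add: bilin_def klin_def)
lemma bilin_add2: "bilin sc B \<Longrightarrow> B x (y + y') = B x y + B x y'" by (simp add: bilin_def klin_def)
lemma bilin_sc1: "bilin sc B \<Longrightarrow> B (sc c x) y = c * B x y" by (simp add: bilin_def klin_def)
lemma bilin_sc2: "bilin sc B \<Longrightarrow> B x (sc c y) = c * B x y" by (simp add: bilin_def klin_def)

lemma trilinI:
  assumes "\<And>x x' y z. T (x + x') y z = T x y z + T x' y z" "\<And>c x y z. T (sc c x) y z = c * T x y z"
    "\<And>x y y' z. T x (y + y') z = T x y z + T x y' z" "\<And>c x y z. T x (sc c y) z = c * T x y z"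
    "\<And>x y z z'. T x y (z + z') = T x y z + T x y z'" "\<And>c x y z. T x y (sc c z) = c * T x y z"
  shows "trilin sc T"
  using assms by (simp add: trilin_def klin_def)
lemma trilin_add1: "trilin sc T \<Longrightarrow> T (x + x') y z = T x y z + T x' y z" by (simp add: trilin_def klin_def)
lemma trilin_add2: "trilin sc T \<Longrightarrow> T x (y + y') z = T x y z + T x y' z" by (simp add: trilin_def klin_def)
lemma trilin_add3: "trilin sc T \<Longrightarrow> T x y (z + z') = T x y z + T x y z'" by (simp add: trilin_def klin_def)
lemma trilin_sc1: "trilin sc T \<Longrightarrow> T (sc c x) y z = c * T x y z" by (simp add: trilin_def klin_def)
lemma trilin_sc2: "trilin sc T \<Longrightarrow> T x (sc c y) z = c * T x y z" by (simp add: trilin_def klin_def)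
lemma trilin_sc3: "trilin sc T \<Longrightarrow> T x y (sc c z) = c * T x y z" by (simp add: trilin_def klin_def)

lemma quadlinI:
  assumes "\<And>x x' y z w. F (x + x') y z w = F x y z w + F x' y z w" "\<And>c x y z w. F (sc c x) y z w = c * F x y z w"
    "\<And>x y y' z w. F x (y + y') z w = F x y z w + F x y' z w" "\<And>c x y z w. F x (sc c y) z w = c * F x y z w"
    "\<And>x y z z' w. F x y (z + z') w = F x y z w + F x y z' w" "\<And>c x y z w. F x y (sc c z) w = c * F x y z w"
    "\<And>x y z w w'. F x y z (w + w') = F x y z w + F x y z w'" "\<And>c x y z w. F x y z (sc c w) = c * F x y z w"
  shows "quadlin sc F"
  using assms by (simp add: quadlin_def klin_def)
lemma quadlin_add1: "quadlin sc F \<Longrightarrow> F (x + x') y z w = F x y z w + F x' y z w" by (simp add: quadlin_def klin_def)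
lemma quadlin_add2: "quadlin sc F \<Longrightarrow> F x (y + y') z w = F x y z w + F x y' z w" by (simp add: quadlin_def klin_def)
lemma quadlin_add3: "quadlin sc F \<Longrightarrow> F x y (z + z') w = F x y z w + F x y z' w" by (simp add: quadlin_def klin_def)
lemma quadlin_add4: "quadlin sc F \<Longrightarrow> F x y z (w + w') = F x y z w + F x y z w'" by (simp add: quadlin_def klin_def)
lemma quadlin_sc1: "quadlin sc F \<Longrightarrow> F (sc c x) y z w = c * F x y z w" by (simp add: quadlin_def klin_def)
lemma quadlin_sc2: "quadlin sc F \<Longrightarrow> F x (sc c y) z w = c * F x y z w" by (simp add: quadlin_def klin_def)
lemma quadlin_sc3: "quadlin sc F \<Longrightarrow> F x y (sc c z) w = c * F x y z w" by (simp add: quadlin_def klin_def)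
lemma quadlin_sc4: "quadlin sc F \<Longrightarrow> F x y z (sc c w) = c * F x y z w" by (simp add: quadlin_def klin_def)

section \<open>Products of formal tensors\<close>

lemma tmul2_simps[simp]:
  "tmul2 [] ys = []" "tmul2 ((a, b) # xs) ys = map (\<lambda>(c, d). (a * c, b * d)) ys @ tmul2 xs ys"
  "tmul2 (xs @ xs') ys = tmul2 xs ys @ tmul2 xs' ys"
  by (simp_all add: tmul2_def)
lemma tmul3_simps[simp]:
  "tmul3 [] ys = []" "tmul3 ((a, b, c) # xs) ys = map (\<lambda>(a', b', c'). (a * a', b * b', c * c')) ys @ tmul3 xs ys"
  "tmul3 (xs @ xs') ys = tmul3 xs ys @ tmul3 xs' ys"
  by (simp_all add: tmul3_def)
lemma tmul4_simps[simp]: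
  "tmul4 [] ys = []" "tmul4 ((a, b, c, d) # xs) ys = map (\<lambda>(a', b', c', d'). (a * a', b * b', c * c', d * d')) ys @ tmul4 xs ys"
  "tmul4 (xs @ xs') ys = tmul4 xs ys @ tmul4 xs' ys"
  by (simp_all add: tmul4_def)

lemma ev2_tmul2: "ev2 (tmul2 xs ys) B = ev2 xs (\<lambda>a b. ev2 ys (\<lambda>c d. B (a * c) (b * d)))"
  by (induct xs) (auto simp: ev2_map case_prod_unfold ev2_def comp_def)
lemma ev3_tmul3: "ev3 (tmul3 xs ys) B = ev3 xs (\<lambda>a b c. ev3 ys (\<lambda>a' b' c'. B (a * a') (b * b') (c * c')))"
  by (induct xs) (auto simp: ev3_map case_prod_unfold ev3_def comp_def)
lemma ev4_tmul4: "ev4 (tmul4 xs ys) B = ev4 xs (\<lambda>a b c d. ev4 ys (\<lambda>a' b' c' d'. B (a * a') (b * b') (c * c') (d * d')))"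
  by (induct xs) (auto simp: ev4_map case_prod_unfold ev4_def comp_def)

lemma map_tmul2: "tmul2 (map f xs) ys = concat (map (\<lambda>x. tmul2 [f x] ys) xs)"
  by (induct xs) (auto simp: tmul2_def)

lemma tmul2_assoc: "tmul2 (tmul2 xs ys) zs = tmul2 xs (tmul2 ys zs)"
  by (induct xs) (auto simp: tmul2_def map_concat comp_def case_prod_unfold mult.assoc)
lemma tmul3_assoc: "tmul3 (tmul3 xs ys) zs = tmul3 xs (tmul3 ys zs)"
  by (induct xs) (auto simp: tmul3_def map_concat comp_def case_prod_unfold mult.assoc)
lemma tmul4_assoc: "tmul4 (tmul4 xs ys) zs = tmul4 xs (tmul4 ys zs)"
  by (induct xs) (auto simp: tmul4_def map_concat comp_def case_prod_unfold mult.assoc)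

lemma tmul2_one[simp]: "tmul2 xs [(1, 1)] = xs" "tmul2 [(1, 1)] xs = xs"
  by (induct xs) (auto simp: tmul2_def)
lemma tmul3_one[simp]: "tmul3 xs [(1, 1, 1)] = xs" "tmul3 [(1, 1, 1)] xs = xs"
  by (induct xs) (auto simp: tmul3_def)
lemma tmul4_one[simp]: "tmul4 xs [(1, 1, 1, 1)] = xs" "tmul4 [(1, 1, 1, 1)] xs = xs"
  by (induct xs) (auto simp: tmul4_def)

lemma klin_zero:
  fixes f :: "'a::ab_group_add \<Rightarrow> 'b::ab_group_add"
  shows "klin sa sb f \<Longrightarrow> f 0 = 0"
  using klin_add[of sa sb f 0 0] by simp

lemma klin_sum_list:
  fixes f :: "'a::ab_group_add \<Rightarrow> 'b::ab_group_add"
  shows "klin sa sb f \<Longrightarrow> f (sum_list (map g xs)) = sum_list (map (\<lambda>x. f (g x)) xs)"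
  by (induct xs) (auto simp: klin_zero klin_add)

lemma klin_ev2:
  fixes f :: "'a::ab_group_add \<Rightarrow> 'b::ab_group_add"
  shows "klin sa sb f \<Longrightarrow> f (ev2 xs B) = ev2 xs (\<lambda>a b. f (B a b))"
  by (induct xs) (auto simp: klin_zero klin_add)
lemma klin_ev3:
  fixes f :: "'a::ab_group_add \<Rightarrow> 'b::ab_group_add"
  shows "klin sa sb f \<Longrightarrow> f (ev3 xs B) = ev3 xs (\<lambda>a b c. f (B a b c))"
  by (induct xs) (auto simp: klin_zero klin_add)
lemma klin_ev4:
  fixes f :: "'a::ab_group_add \<Rightarrow> 'b::ab_group_add"
  shows "klin sa sb f \<Longrightarrow> f (ev4 xs B) = ev4 xs (\<lambda>a b c d. f (B a b c d))"
  by (induct xs) (auto simp: klin_zero klin_add)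

lemma klin_comp: "klin sa sb f \<Longrightarrow> klin sb sc g \<Longrightarrow> klin sa sc (\<lambda>x. g (f x))"
  by (simp add: klin_def)

lemma lin_add:
  "klin sa (*) f \<Longrightarrow> klin sa (*) g \<Longrightarrow> klin sa (*) (\<lambda>x. f x + g x)"
  by (simp add: klin_def algebra_simps)
lemma lin_cmult:
  "klin sa (*) f \<Longrightarrow> klin sa (*) (\<lambda>x. (c::'k::field) * f x)"
  by (simp add: klin_def algebra_simps)
lemma lin_multc:
  "klin sa (*) f \<Longrightarrow> klin sa (*) (\<lambda>x. f x * (c::'k::field))"
  by (simp add: klin_def algebra_simps)
lemma lin_sum_list:
  "(\<And>p. klin sa (*) (\<lambda>x. F p x)) \<Longrightarrow> klin sa (*) (\<lambda>x. sum_list (map (\<lambda>p. F p x) ys) :: 'k::field)"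
  by (induct ys) (auto simp: klin_def algebra_simps sum_list_addf sum_list_const_mult)
lemma lin_ev2:
  "(\<And>a b. klin sa (*) (\<lambda>x. F x a b)) \<Longrightarrow> klin sa (*) (\<lambda>x. ev2 ys (F x) :: 'k::field)"
  by (induct ys) (auto simp: klin_def algebra_simps)
lemma lin_ev3:
  "(\<And>a b c. klin sa (*) (\<lambda>x. F x a b c)) \<Longrightarrow> klin sa (*) (\<lambda>x. ev3 ys (F x) :: 'k::field)"
  by (induct ys) (auto simp: klin_def algebra_simps)
lemma lin_ev4:
  "(\<And>a b c d. klin sa (*) (\<lambda>x. F x a b c d)) \<Longrightarrow> klin sa (*) (\<lambda>x. ev4 ys (F x) :: 'k::field)"
  by (induct ys) (auto simp: klin_def algebra_simps)
lemma lin_const_zero: "klin sa (*) (\<lambda>x. 0 :: 'k::field)"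
  by (simp add: klin_def)

lemma lin_bilin1: "bilin sc B \<Longrightarrow> klin sc sc f \<Longrightarrow> klin sc (*) (\<lambda>x. B (f x) y)"
  by (simp add: bilin_def klin_def)
lemma lin_bilin2: "bilin sc B \<Longrightarrow> klin sc sc f \<Longrightarrow> klin sc (*) (\<lambda>x. B y (f x))"
  by (simp add: bilin_def klin_def)
lemma lin_trilin1: "trilin sc B \<Longrightarrow> klin sc sc f \<Longrightarrow> klin sc (*) (\<lambda>x. B (f x) y z)"
  by (simp add: trilin_def klin_def)
lemma lin_trilin2: "trilin sc B \<Longrightarrow> klin sc sc f \<Longrightarrow> klin sc (*) (\<lambda>x. B y (f x) z)"
  by (simp add: trilin_def klin_def)
lemma lin_trilin3: "trilin sc B \<Longrightarrow> klin sc sc f \<Longrightarrow> klin sc (*) (\<lambda>x. B y z (f x))"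
  by (simp add: trilin_def klin_def)
lemma lin_quadlin1: "quadlin sc B \<Longrightarrow> klin sc sc f \<Longrightarrow> klin sc (*) (\<lambda>x. B (f x) y z w)"
  by (simp add: quadlin_def klin_def)
lemma lin_quadlin2: "quadlin sc B \<Longrightarrow> klin sc sc f \<Longrightarrow> klin sc (*) (\<lambda>x. B y (f x) z w)"
  by (simp add: quadlin_def klin_def)
lemma lin_quadlin3: "quadlin sc B \<Longrightarrow> klin sc sc f \<Longrightarrow> klin sc (*) (\<lambda>x. B y z (f x) w)"
  by (simp add: quadlin_def klin_def)
lemma lin_quadlin4: "quadlin sc B \<Longrightarrow> klin sc sc f \<Longrightarrow> klin sc (*) (\<lambda>x. B y z w (f x))"
  by (simp add: quadlin_def klin_def)

lemma bilin_linI: "(\<And>y. klin sc (*) (\<lambda>x. B x y)) \<Longrightarrow> (\<And>x. klin sc (*) (\<lambda>y. B x y)) \<Longrightarrow> bilin sc B"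
  by (simp add: bilin_def)
lemma trilin_linI: "(\<And>y z. klin sc (*) (\<lambda>x. B x y z)) \<Longrightarrow> (\<And>x z. klin sc (*) (\<lambda>y. B x y z))
   \<Longrightarrow> (\<And>x y. klin sc (*) (\<lambda>z. B x y z)) \<Longrightarrow> trilin sc B"
  by (simp add: trilin_def)
lemma quadlin_linI: "(\<And>y z w. klin sc (*) (\<lambda>x. B x y z w)) \<Longrightarrow> (\<And>x z w. klin sc (*) (\<lambda>y. B x y z w))
   \<Longrightarrow> (\<And>x y w. klin sc (*) (\<lambda>z. B x y z w)) \<Longrightarrow> (\<And>x y z. klin sc (*) (\<lambda>w. B x y z w)) \<Longrightarrow> quadlin sc B"
  by (simp add: quadlin_def)

section \<open>Algebras over k\<close>

locale kalg =
  fixes sc :: "'k::field \<Rightarrow> 'h::ring_1 \<Rightarrow> 'h"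
  assumes kalg: "kalgebra sc"
begin

lemma module_sc: "module sc" using kalg by (simp add: kalgebra_def)
lemma vector_space_sc: "vector_space sc" using module_sc by (simp add: module_iff_vector_space)

lemma sc_add_r: "sc c (x + y) = sc c x + sc c y" using module_sc by (simp add: module_def)
lemma sc_add_l: "sc (a + b) x = sc a x + sc b x" using module_sc by (simp add: module_def)
lemma sc_sc[simp]: "sc a (sc b x) = sc (a * b) x" using module_sc by (simp add: module_def)
lemma sc_one[simp]: "sc 1 x = x" using module_sc by (simp add: module_def)
lemma sc_zero_l[simp]: "sc 0 x = 0" using module.scale_zero_left[OF module_sc] .
lemma sc_zero_r[simp]: "sc c 0 = 0" using module.scale_zero_right[OF module_sc] .
lemma sc_mult_l: "sc c x * y = sc c (x * y)" using kalg unfolding kalgebra_def by metis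
lemma sc_mult_r: "x * sc c y = sc c (x * y)" using kalg unfolding kalgebra_def by metis

lemma klin_idI: "klin sc sc (\<lambda>x. x)" by (simp add: klin_def)
lemma klin_multR: "klin sc sc f \<Longrightarrow> klin sc sc (\<lambda>x. f x * v)"
  by (simp add: klin_def distrib_right sc_mult_l)
lemma klin_multL: "klin sc sc f \<Longrightarrow> klin sc sc (\<lambda>x. u * f x)"
  by (simp add: klin_def distrib_left sc_mult_r)
lemma klin_scR: "klin sc (*) f \<Longrightarrow> klin sc sc (\<lambda>x. sc (f x) v)"
  by (simp add: klin_def sc_add_l)

lemmas klin_intros = klin_idI klin_multR klin_multL

lemma bilin_mult: assumes B: "bilin sc B" shows "bilin sc (\<lambda>a b. B (u * a * v) (w * b * z))"
  by (intro bilin_linI lin_bilin1[OF B] lin_bilin2[OF B] klin_intros)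

lemma bilin_ev2_tmul: assumes B: "bilin sc B" shows "bilin sc (\<lambda>a b. ev2 ys (\<lambda>c d. B (a * c) (b * d)))"
  by (intro bilin_linI lin_ev2 lin_bilin1[OF B] lin_bilin2[OF B] klin_intros)
lemma bilin_tmul_r: assumes B: "bilin sc B" shows "bilin sc (\<lambda>a b. B (c * a) (d * b))"
  by (intro bilin_linI lin_bilin1[OF B] lin_bilin2[OF B] klin_intros)
lemma trilin_ev3_tmul: assumes B: "trilin sc B" shows "trilin sc (\<lambda>a b c. ev3 ys (\<lambda>a' b' c'. B (a * a') (b * b') (c * c')))"
  by (intro trilin_linI lin_ev3 lin_trilin1[OF B] lin_trilin2[OF B] lin_trilin3[OF B] klin_intros)
lemma trilin_tmul_r: assumes B: "trilin sc B" shows "trilin sc (\<lambda>a b c. B (a' * a) (b' * b) (c' * c))"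
  by (intro trilin_linI lin_trilin1[OF B] lin_trilin2[OF B] lin_trilin3[OF B] klin_intros)
lemma quadlin_ev4_tmul: assumes B: "quadlin sc B" shows "quadlin sc (\<lambda>a b c d. ev4 ys (\<lambda>a' b' c' d'. B (a * a') (b * b') (c * c') (d * d')))"
  by (intro quadlin_linI lin_ev4 lin_quadlin1[OF B] lin_quadlin2[OF B] lin_quadlin3[OF B] lin_quadlin4[OF B] klin_intros)
lemma quadlin_tmul_r: assumes B: "quadlin sc B" shows "quadlin sc (\<lambda>a b c d. B (a' * a) (b' * b) (c' * c) (d' * d))"
  by (intro quadlin_linI lin_quadlin1[OF B] lin_quadlin2[OF B] lin_quadlin3[OF B] lin_quadlin4[OF B] klin_intros)

lemma tmul2_cong1: "teq2 sc xs xs' \<Longrightarrow> teq2 sc (tmul2 xs ys) (tmul2 xs' ys)"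
  by (simp add: teq2_iff ev2_tmul2 bilin_ev2_tmul)
lemma tmul2_cong2: "teq2 sc ys ys' \<Longrightarrow> teq2 sc (tmul2 xs ys) (tmul2 xs ys')"
  by (auto simp add: teq2_iff ev2_tmul2 bilin_tmul_r intro!: ev2_cong)
lemma tmul3_cong1: "teq3 sc xs xs' \<Longrightarrow> teq3 sc (tmul3 xs ys) (tmul3 xs' ys)"
  by (simp add: teq3_iff ev3_tmul3 trilin_ev3_tmul)
lemma tmul3_cong2: "teq3 sc ys ys' \<Longrightarrow> teq3 sc (tmul3 xs ys) (tmul3 xs ys')"
  by (auto simp add: teq3_iff ev3_tmul3 trilin_tmul_r intro!: ev3_cong)
lemma tmul4_cong1: "teq4 sc xs xs' \<Longrightarrow> teq4 sc (tmul4 xs ys) (tmul4 xs' ys)"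
  by (simp add: teq4_iff ev4_tmul4 quadlin_ev4_tmul)
lemma tmul4_cong2: "teq4 sc ys ys' \<Longrightarrow> teq4 sc (tmul4 xs ys) (tmul4 xs ys')"
  by (auto simp add: teq4_iff ev4_tmul4 quadlin_tmul_r intro!: ev4_cong)

end

definition oneL :: "('h::one \<times> 'h \<times> 'h) list \<Rightarrow> ('h \<times> 'h \<times> 'h \<times> 'h) list" where
  "oneL xs = map (\<lambda>(a, b, c). (1, a, b, c)) xs"
definition oneR :: "('h::one \<times> 'h \<times> 'h) list \<Rightarrow> ('h \<times> 'h \<times> 'h \<times> 'h) list" where
  "oneR xs = map (\<lambda>(a, b, c). (a, b, c, 1)) xs"

lemma ev4_oneL: "ev4 (oneL xs) F = ev3 xs (\<lambda>a b c. F 1 a b c)"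
  by (induct xs) (auto simp: oneL_def)
lemma ev4_oneR: "ev4 (oneR xs) F = ev3 xs (\<lambda>a b c. F a b c 1)"
  by (induct xs) (auto simp: oneR_def)
lemma ev3_id_D: "ev3 (id_D D xs) T = ev2 xs (\<lambda>a b. ev2 (D b) (\<lambda>c d. T a c d))"
  by (induct xs) (auto simp: id_D_def ev3_map ev2_def case_prod_unfold comp_def)
lemma ev3_D_id: "ev3 (D_id D xs) T = ev2 xs (\<lambda>a b. ev2 (D a) (\<lambda>c d. T c d b))"
  by (induct xs) (auto simp: D_id_def ev3_map ev2_def case_prod_unfold comp_def)
lemma ev4_id_id_D: "ev4 (id_id_D D xs) F = ev3 xs (\<lambda>a b c. ev2 (D c) (\<lambda>d e. F a b d e))"
  by (induct xs) (auto simp: id_id_D_def ev4_map ev2_def case_prod_unfold comp_def)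
lemma ev4_id_D_id: "ev4 (id_D_id D xs) F = ev3 xs (\<lambda>a b c. ev2 (D b) (\<lambda>d e. F a d e c))"
  by (induct xs) (auto simp: id_D_id_def ev4_map ev2_def case_prod_unfold comp_def)
lemma ev4_D_id_id: "ev4 (D_id_id D xs) F = ev3 xs (\<lambda>a b c. ev2 (D a) (\<lambda>d e. F d e b c))"
  by (induct xs) (auto simp: D_id_id_def ev4_map ev2_def case_prod_unfold comp_def)

lemma oneL_tmul: "tmul4 (oneL xs) (oneL ys) = oneL (tmul3 xs ys)"
  by (induct xs) (auto simp: oneL_def tmul4_def tmul3_def case_prod_unfold)
lemma oneL_one: "oneL [(1, 1, 1)] = [(1, 1, 1, 1)]" by (simp add: oneL_def)

locale qba = kalg sc for sc :: "'k::field \<Rightarrow> 'h::ring_1 \<Rightarrow> 'h" +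
  fixes D :: "'h \<Rightarrow> ('h \<times> 'h) list" and eps :: "'h \<Rightarrow> 'k" and phi phii :: "('h \<times> 'h \<times> 'h) list"
  assumes qba: "quasibialgebra sc D eps phi phii"
begin

lemma D_add: "teq2 sc (D (x + y)) (D x @ D y)" using qba by (simp add: quasibialgebra_def)
lemma D_sc: "teq2 sc (D (sc c x)) (map (\<lambda>(a, b). (sc c a, b)) (D x))" using qba by (simp add: quasibialgebra_def)
lemma D_mult: "teq2 sc (D (x * y)) (tmul2 (D x) (D y))" using qba by (simp add: quasibialgebra_def)
lemma D_one: "teq2 sc (D 1) [(1, 1)]" using qba by (simp add: quasibialgebra_def)
lemma eps_alg: "alg_map sc (*) eps" using qba by (simp add: quasibialgebra_def)
lemma phi_inv1: "teq3 sc (tmul3 phi phii) [(1, 1, 1)]" using qba by (simp add: quasibialgebra_def)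
lemma phi_inv2: "teq3 sc (tmul3 phii phi) [(1, 1, 1)]" using qba by (simp add: quasibialgebra_def)
lemma counitL: "sum_list (map (\<lambda>(a, b). sc (eps a) b) (D h)) = h" using qba by (simp add: quasibialgebra_def)
lemma counitR: "sum_list (map (\<lambda>(a, b). sc (eps b) a) (D h)) = h" using qba by (simp add: quasibialgebra_def)
lemma qcoass: "teq3 sc (tmul3 (id_D D (D h)) phi) (tmul3 phi (D_id D (D h)))" using qba by (simp add: quasibialgebra_def)
lemma pent: "teq4 sc (tmul4 (id_id_D D phi) (D_id_id D phi)) (tmul4 (tmul4 (oneL phi) (id_D_id D phi)) (oneR phi))"
  using qba by (simp add: quasibialgebra_def oneL_def oneR_def)
lemma norm: "teq2 sc (map (\<lambda>(a, b, c). (sc (eps b) a, c)) phi) [(1, 1)]" using qba by (simp add: quasibialgebra_def)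

lemma eps_klin: "klin sc (*) eps" using eps_alg by (simp add: alg_map_def)
lemma eps_add[simp]: "eps (x + y) = eps x + eps y" using eps_alg by (simp add: alg_map_def klin_def)
lemma eps_sc[simp]: "eps (sc c x) = c * eps x" using eps_alg by (simp add: alg_map_def klin_def)
lemma eps_mult[simp]: "eps (x * y) = eps x * eps y" using eps_alg by (simp add: alg_map_def)
lemma eps_one[simp]: "eps 1 = 1" using eps_alg by (simp add: alg_map_def)

lemma evD_add: "bilin sc B \<Longrightarrow> ev2 (D (x + y)) B = ev2 (D x) B + ev2 (D y) B"
  using teq2D[OF D_add] by simp
lemma evD_sc: assumes B: "bilin sc B" shows "ev2 (D (sc c x)) B = c * ev2 (D x) B"
proof -
  have "ev2 (D (sc c x)) B = ev2 (map (\<lambda>(a, b). (sc c a, b)) (D x)) B" using teq2D[OF D_sc B] .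
  also have "\<dots> = ev2 (D x) (\<lambda>a b. c * B a b)"
    by (simp add: ev2_map ev2_def case_prod_unfold bilin_sc1[OF B] comp_def)
  finally show ?thesis by (simp add: ev2_mult_form)
qed
lemma evD_mult: "bilin sc B \<Longrightarrow> ev2 (D (x * y)) B = ev2 (D x) (\<lambda>a b. ev2 (D y) (\<lambda>c d. B (a * c) (b * d)))"
  using teq2D[OF D_mult] by (simp add: ev2_tmul2)
lemma evD_one: "bilin sc B \<Longrightarrow> ev2 (D 1) B = B 1 1"
  using teq2D[OF D_one] by simp

lemma lin_D: assumes B: "bilin sc B" and f: "klin sc sc f" shows "klin sc (*) (\<lambda>x. ev2 (D (f x)) B)"
  using f by (simp add: klin_def evD_add[OF B] evD_sc[OF B])

lemma counitL_lin: "klin sc (*) g \<Longrightarrow> ev2 (D h) (\<lambda>a b. eps a * g b) = g h"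
proof -
  assume g: "klin sc (*) g"
  have "g h = g (sum_list (map (\<lambda>(a, b). sc (eps a) b) (D h)))" by (simp add: counitL)
  also have "\<dots> = ev2 (D h) (\<lambda>a b. eps a * g b)"
    by (simp add: klin_sum_list[OF g] ev2_def case_prod_unfold klin_sc[OF g])
  finally show ?thesis by simp
qed
lemma counitR_lin: "klin sc (*) g \<Longrightarrow> ev2 (D h) (\<lambda>a b. eps b * g a) = g h"
proof -
  assume g: "klin sc (*) g"
  have "g h = g (sum_list (map (\<lambda>(a, b). sc (eps b) a) (D h)))" by (simp add: counitR)
  also have "\<dots> = ev2 (D h) (\<lambda>a b. eps b * g a)"
    by (simp add: klin_sum_list[OF g] ev2_def case_prod_unfold klin_sc[OF g])
  finally show ?thesis by simp
qed

lemma norm_form: "bilin sc K \<Longrightarrow> ev3 phi (\<lambda>a b c. eps b * K a c) = K 1 1"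
proof -
  assume K: "bilin sc K"
  have "ev2 (map (\<lambda>(a, b, c). (sc (eps b) a, c)) phi) K = K 1 1" using teq2D[OF norm K] by simp
  moreover have "ev2 (map (\<lambda>(a, b, c). (sc (eps b) a, c)) phi) K = ev3 phi (\<lambda>a b c. eps b * K a c)"
    by (simp add: ev2_map ev3_def case_prod_unfold bilin_sc1[OF K])
  ultimately show ?thesis by simp
qed

lemma qcoass_inv: "teq3 sc (tmul3 phii (id_D D (D h))) (tmul3 (D_id D (D h)) phii)"
proof -
  let ?A = "id_D D (D h)" and ?B = "D_id D (D h)"
  have "teq3 sc (tmul3 phii ?A) (tmul3 (tmul3 phii ?A) (tmul3 phi phii))"
    using tmul3_cong2[OF teq3_sym[OF phi_inv1], of "tmul3 phii ?A"] by simp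
  also have "tmul3 (tmul3 phii ?A) (tmul3 phi phii) = tmul3 phii (tmul3 (tmul3 ?A phi) phii)"
    by (simp add: tmul3_assoc)
  also have "teq3 sc \<dots> (tmul3 phii (tmul3 (tmul3 phi ?B) phii))"
    by (intro tmul3_cong2 tmul3_cong1 qcoass)
  also have "tmul3 phii (tmul3 (tmul3 phi ?B) phii) = tmul3 (tmul3 phii phi) (tmul3 ?B phii)"
    by (simp add: tmul3_assoc)
  also have "teq3 sc \<dots> (tmul3 [(1, 1, 1)] (tmul3 ?B phii))"
    by (intro tmul3_cong1 phi_inv2)
  finally show ?thesis by simp
qed

end

context qba begin

lemma pent_ev: "quadlin sc F \<Longrightarrow> ev4 (tmul4 (id_id_D D phi) (D_id_id D phi)) F =
   ev4 (tmul4 (tmul4 (oneL phi) (id_D_id D phi)) (oneR phi)) F"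
  using teq4D[OF pent] .

lemma counitR_lin2: "klin sc (*) g \<Longrightarrow> ev2 (D h) (\<lambda>x y. c * eps y * g x) = c * g h"
  by (simp add: mult.assoc ev2_mult_form counitR_lin)
lemma counitL_lin2: "klin sc (*) g \<Longrightarrow> ev2 (D h) (\<lambda>x y. c * eps x * g y) = c * g h"
  by (simp add: mult.assoc ev2_mult_form counitL_lin)
lemma norm_form2: "bilin sc K \<Longrightarrow> ev3 phi (\<lambda>x y z. c * eps y * K x z) = c * K 1 1"
  by (simp add: mult.assoc ev3_mult_form norm_form)

definition "Peps = map (\<lambda>(a, b, c). (1, sc (eps a) b, c)) phi"

lemma epsL_aux: assumes G: "trilin sc G" shows "ev3 phi G = ev3 (tmul3 Peps phi) G"
proof -
  let ?F = "\<lambda>a b c d. eps b * G a c d"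
  have F: "quadlin sc ?F"
    by (intro quadlin_linI lin_cmult lin_multc eps_klin lin_trilin1[OF G] lin_trilin2[OF G] lin_trilin3[OF G] klin_idI)
  have cR: "\<And>c0 h a y z. ev2 (D h) (\<lambda>x w. c0 * eps w * G (a * x) y z) = c0 * G (a * h) y z"
    by (rule counitR_lin2, intro lin_trilin1[OF G] klin_intros)
  define K where "K p q = ev2 (D q) (\<lambda>d e. ev3 phi (\<lambda>a' b' c'. G (p * a') (d * b') (e * c')))" for p q
  have Kin: "bilin sc (\<lambda>d e. ev3 phi (\<lambda>a' b' c'. G (p * a') (d * b') (e * c')))" for p
    by (intro bilin_linI lin_ev3 lin_trilin2[OF G] lin_trilin3[OF G] klin_intros)
  have K: "bilin sc K"
    unfolding K_def
    by (intro bilin_linI lin_D[OF Kin] lin_ev2 lin_ev3 lin_trilin1[OF G] klin_intros)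
  have nf: "ev3 phi (\<lambda>a b c. eps b * K a c) = K 1 1" by (rule norm_form[OF K])
  have K11: "K 1 1 = ev3 phi G" unfolding K_def by (subst evD_one[OF Kin]) simp
  have "ev4 (tmul4 (id_id_D D phi) (D_id_id D phi)) ?F = ev3 phi (\<lambda>a b c. eps b * K a c)"
    by (simp add: ev4_tmul4 ev4_id_id_D ev4_D_id_id cR ev3_mult_form ev2_mult_form K_def)
  also have "\<dots> = ev3 phi G" using nf K11 by simp
  finally have L: "ev4 (tmul4 (id_id_D D phi) (D_id_id D phi)) ?F = ev3 phi G" .
  have nf2: "\<And>c0 X1 u v. ev3 phi (\<lambda>x y z. c0 * eps y * G (X1 * x) (u * z) v) = c0 * G X1 u v"
  proof -
    fix c0 X1 u v
    have "bilin sc (\<lambda>p q. G (X1 * p) (u * q) v)"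
      by (intro bilin_linI lin_trilin1[OF G] lin_trilin2[OF G] klin_intros)
    from norm_form2[OF this, of c0] show "ev3 phi (\<lambda>x y z. c0 * eps y * G (X1 * x) (u * z) v) = c0 * G X1 u v"
      by simp
  qed
  have cL: "\<And>c0 X1 b v h. ev2 (D h) (\<lambda>x y. c0 * eps x * G X1 (b * y) v) = c0 * G X1 (b * h) v"
    by (rule counitL_lin2, intro lin_trilin2[OF G] klin_intros)
  have "ev4 (tmul4 (tmul4 (oneL phi) (id_D_id D phi)) (oneR phi)) ?F =
      ev3 phi (\<lambda>a b c. eps a * ev3 phi (\<lambda>x y z. G x (b * y) (c * z)))"
    by (simp add: ev4_tmul4 ev4_oneL ev4_oneR ev4_id_D_id nf2 cL ev3_mult_form)
  also have "\<dots> = ev3 (tmul3 Peps phi) G"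
    by (simp add: ev3_tmul3 Peps_def ev3_map case_prod_unfold sc_mult_l trilin_sc2[OF G]
        ev3_mult_form) (simp add: ev3_def case_prod_unfold)
  finally show ?thesis using L pent_ev[OF F] by simp
qed

lemma Peps_one: "teq3 sc Peps [(1, 1, 1)]"
proof -
  have t: "teq3 sc phi (tmul3 Peps phi)" by (simp add: teq3_iff epsL_aux)
  have "teq3 sc Peps (tmul3 Peps (tmul3 phi phii))" using tmul3_cong2[OF teq3_sym[OF phi_inv1], of Peps] by simp
  also have "tmul3 Peps (tmul3 phi phii) = tmul3 (tmul3 Peps phi) phii" by (simp add: tmul3_assoc)
  also have "teq3 sc \<dots> (tmul3 phi phii)" by (rule tmul3_cong1[OF teq3_sym[OF t]])
  also have "teq3 sc \<dots> [(1, 1, 1)]" by (rule phi_inv1)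
  finally show ?thesis .
qed

lemma epsL_phi: assumes C: "bilin sc C" shows "ev3 phi (\<lambda>a b c. eps a * C b c) = C 1 1"
proof -
  have G: "trilin sc (\<lambda>a b c. eps a * C b c)"
    by (intro trilin_linI lin_multc lin_cmult eps_klin lin_bilin1[OF C] lin_bilin2[OF C] klin_idI)
  from teq3D[OF Peps_one G] show ?thesis
    by (simp add: Peps_def ev3_map case_prod_unfold bilin_sc1[OF C]) (simp add: ev3_def case_prod_unfold)
qed

lemma epsL_phii: assumes C: "bilin sc C" shows "ev3 phii (\<lambda>a b c. eps a * C b c) = C 1 1"
proof -
  have G: "trilin sc (\<lambda>a b c. eps a * C b c)"
    by (intro trilin_linI lin_multc lin_cmult eps_klin lin_bilin1[OF C] lin_bilin2[OF C] klin_idI)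
  define K where "K p q = ev3 phii (\<lambda>a' b' c'. eps a' * C (p * b') (q * c'))" for p q
  have K: "bilin sc K" unfolding K_def
    by (intro bilin_linI lin_ev3 lin_cmult lin_bilin1[OF C] lin_bilin2[OF C] klin_intros)
  have "C 1 1 = ev3 (tmul3 phi phii) (\<lambda>a b c. eps a * C b c)"
    using teq3D[OF phi_inv1 G] by simp
  also have "\<dots> = ev3 phi (\<lambda>a b c. eps a * K b c)"
    by (simp add: ev3_tmul3 K_def mult.assoc ev3_mult_form)
  also have "\<dots> = K 1 1" by (rule epsL_phi[OF K])
  finally show ?thesis by (simp add: K_def)
qed

end

lemma ev2_ev2_swap:
  fixes f :: "_ \<Rightarrow> _ \<Rightarrow> _ \<Rightarrow> _ \<Rightarrow> 'k::comm_monoid_add"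
  shows "ev2 xs (\<lambda>a b. ev2 ys (\<lambda>c d. f a b c d)) = ev2 ys (\<lambda>c d. ev2 xs (\<lambda>a b. f a b c d))"
  unfolding ev2_def case_prod_unfold by (rule sum_list_swap)
lemma ev2_ev3_swap:
  fixes f :: "_ \<Rightarrow> _ \<Rightarrow> _ \<Rightarrow> _ \<Rightarrow> _ \<Rightarrow> 'k::comm_monoid_add"
  shows "ev2 xs (\<lambda>a b. ev3 ys (\<lambda>c d e. f a b c d e)) = ev3 ys (\<lambda>c d e. ev2 xs (\<lambda>a b. f a b c d e))"
  unfolding ev2_def ev3_def case_prod_unfold by (rule sum_list_swap)
lemma ev3_ev3_swap:
  fixes f :: "_ \<Rightarrow> _ \<Rightarrow> _ \<Rightarrow> _ \<Rightarrow> _ \<Rightarrow> _ \<Rightarrow> 'k::comm_monoid_add"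
  shows "ev3 xs (\<lambda>a b c. ev3 ys (\<lambda>d e g. f a b c d e g)) = ev3 ys (\<lambda>d e g. ev3 xs (\<lambda>a b c. f a b c d e g))"
  unfolding ev3_def case_prod_unfold by (rule sum_list_swap)

context qba begin

lemma D_id_id_cong: assumes "teq3 sc xs ys" shows "teq4 sc (D_id_id D xs) (D_id_id D ys)"
proof -
  have "ev4 (D_id_id D xs) F = ev4 (D_id_id D ys) F" if F: "quadlin sc F" for F
  proof -
    have i: "bilin sc (\<lambda>d e. F d e b c)" for b c
      by (intro bilin_linI lin_quadlin1[OF F] lin_quadlin2[OF F] klin_idI)
    have "trilin sc (\<lambda>a b c. ev2 (D a) (\<lambda>d e. F d e b c))"
      by (intro trilin_linI lin_D[OF i] lin_ev2 lin_quadlin3[OF F] lin_quadlin4[OF F] klin_idI)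
    then show ?thesis using teq3D[OF assms] by (simp add: ev4_D_id_id)
  qed
  then show ?thesis by (simp add: teq4_iff)
qed

lemma D_id_id_mult: "teq4 sc (tmul4 (D_id_id D xs) (D_id_id D ys)) (D_id_id D (tmul3 xs ys))"
proof -
  have "ev4 (tmul4 (D_id_id D xs) (D_id_id D ys)) F = ev4 (D_id_id D (tmul3 xs ys)) F" if F: "quadlin sc F" for F
  proof -
    have i: "bilin sc (\<lambda>d e. F d e b c)" for b c
      by (intro bilin_linI lin_quadlin1[OF F] lin_quadlin2[OF F] klin_idI)
    show ?thesis
      by (simp add: ev4_tmul4 ev4_D_id_id ev3_tmul3 evD_mult[OF i] ev2_ev3_swap)
  qed
  then show ?thesis by (simp add: teq4_iff)
qed

lemma D_id_id_one: "teq4 sc (D_id_id D [(1, 1, 1)]) [(1, 1, 1, 1)]"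
proof -
  have "ev4 (D_id_id D [(1, 1, 1)]) F = ev4 [(1, 1, 1, 1)] F" if F: "quadlin sc F" for F
  proof -
    have i: "bilin sc (\<lambda>d e. F d e b c)" for b c
      by (intro bilin_linI lin_quadlin1[OF F] lin_quadlin2[OF F] klin_idI)
    show ?thesis by (simp add: ev4_D_id_id evD_one[OF i])
  qed
  then show ?thesis by (simp add: teq4_iff)
qed

lemma oneL_cong: assumes "teq3 sc xs ys" shows "teq4 sc (oneL xs) (oneL ys)"
proof -
  have "ev4 (oneL xs) F = ev4 (oneL ys) F" if F: "quadlin sc F" for F
  proof -
    have "trilin sc (\<lambda>a b c. F 1 a b c)"
      by (intro trilin_linI lin_quadlin2[OF F] lin_quadlin3[OF F] lin_quadlin4[OF F] klin_idI)
    then show ?thesis using teq3D[OF assms] by (simp add: ev4_oneL)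
  qed
  then show ?thesis by (simp add: teq4_iff)
qed

lemma Zeq: "teq4 sc (tmul4 (oneL phii) (id_id_D D phi))
   (tmul4 (tmul4 (id_D_id D phi) (oneR phi)) (D_id_id D phii))"
proof -
  let ?Z = "tmul4 (oneL phii) (id_id_D D phi)"
  let ?A = "id_id_D D phi" and ?B = "D_id_id D phi" and ?Bi = "D_id_id D phii"
  let ?M = "id_D_id D phi" and ?N = "oneR phi"
  have BB: "teq4 sc (tmul4 ?B ?Bi) [(1, 1, 1, 1)]"
    using teq4_trans[OF D_id_id_mult teq4_trans[OF D_id_id_cong[OF phi_inv1] D_id_id_one]] .
  have "teq4 sc ?Z (tmul4 ?Z (tmul4 ?B ?Bi))"
    using tmul4_cong2[OF teq4_sym[OF BB], of ?Z] by simp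
  also have "tmul4 ?Z (tmul4 ?B ?Bi) = tmul4 (oneL phii) (tmul4 (tmul4 ?A ?B) ?Bi)"
    by (simp add: tmul4_assoc)
  also have "teq4 sc \<dots> (tmul4 (oneL phii) (tmul4 (tmul4 (tmul4 (oneL phi) ?M) ?N) ?Bi))"
    by (intro tmul4_cong2 tmul4_cong1 pent)
  also have "tmul4 (oneL phii) (tmul4 (tmul4 (tmul4 (oneL phi) ?M) ?N) ?Bi) =
      tmul4 (tmul4 (oneL phii) (oneL phi)) (tmul4 (tmul4 ?M ?N) ?Bi)"
    by (simp add: tmul4_assoc)
  also have "teq4 sc \<dots> (tmul4 [(1, 1, 1, 1)] (tmul4 (tmul4 ?M ?N) ?Bi))"
    by (intro tmul4_cong1) (simp add: oneL_tmul oneL_cong[OF phi_inv2, simplified oneL_one])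
  finally show ?thesis by simp
qed

end

locale qhopf = qba sc D eps phi phii for sc :: "'k::field \<Rightarrow> 'h::ring_1 \<Rightarrow> 'h" and D eps phi phii +
  fixes S :: "'h \<Rightarrow> 'h" and \<alpha> \<beta> :: 'h
  assumes qant: "quasi_antipode sc D eps phi phii S \<alpha> \<beta>"
begin

lemma S_anti: "anti_alg_map sc sc S" using qant by (simp add: quasi_antipode_def)
lemma S_klin: "klin sc sc S" using S_anti by (simp add: anti_alg_map_def)
lemma S_mult: "S (x * y) = S y * S x" using S_anti by (simp add: anti_alg_map_def)
lemma S_one: "S 1 = 1" using S_anti by (simp add: anti_alg_map_def)
lemma anti1: "sum_list (map (\<lambda>(a, b). S a * \<alpha> * b) (D h)) = sc (eps h) \<alpha>" using qant by (simp add: quasi_antipode_def)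
lemma anti2: "sum_list (map (\<lambda>(a, b). a * \<beta> * S b) (D h)) = sc (eps h) \<beta>" using qant by (simp add: quasi_antipode_def)
lemma anti3: "sum_list (map (\<lambda>(a, b, c). a * \<beta> * S b * \<alpha> * c) phi) = 1" using qant by (simp add: quasi_antipode_def)
lemma anti4: "sum_list (map (\<lambda>(a, b, c). S a * \<alpha> * b * \<beta> * S c) phii) = 1" using qant by (simp add: quasi_antipode_def)

lemma klin_S: "klin sc sc f \<Longrightarrow> klin sc sc (\<lambda>x. S (f x))"
  using klin_comp[OF _ S_klin] .

lemma anti1_lin: assumes g: "klin sc (*) g" shows "ev2 (D h) (\<lambda>a b. g (S a * \<alpha> * b)) = eps h * g \<alpha>"
proof -
  have "eps h * g \<alpha> = g (sum_list (map (\<lambda>(a, b). S a * \<alpha> * b) (D h)))" by (simp add: anti1 klin_sc[OF g])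
  also have "\<dots> = ev2 (D h) (\<lambda>a b. g (S a * \<alpha> * b))"
    by (simp add: klin_sum_list[OF g] ev2_def case_prod_unfold)
  finally show ?thesis by simp
qed
lemma anti2_lin: assumes g: "klin sc (*) g" shows "ev2 (D h) (\<lambda>a b. g (a * \<beta> * S b)) = eps h * g \<beta>"
proof -
  have "eps h * g \<beta> = g (sum_list (map (\<lambda>(a, b). a * \<beta> * S b) (D h)))" by (simp add: anti2 klin_sc[OF g])
  also have "\<dots> = ev2 (D h) (\<lambda>a b. g (a * \<beta> * S b))"
    by (simp add: klin_sum_list[OF g] ev2_def case_prod_unfold)
  finally show ?thesis by simp
qed
lemma anti3_lin: assumes g: "klin sc (*) g" shows "ev3 phi (\<lambda>a b c. g (a * \<beta> * S b * \<alpha> * c)) = g 1"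
proof -
  have "g 1 = g (sum_list (map (\<lambda>(a, b, c). a * \<beta> * S b * \<alpha> * c) phi))" by (simp add: anti3)
  also have "\<dots> = ev3 phi (\<lambda>a b c. g (a * \<beta> * S b * \<alpha> * c))"
    by (simp add: klin_sum_list[OF g] ev3_def case_prod_unfold)
  finally show ?thesis by simp
qed

lemma A_lem: assumes C: "bilin sc C"
  shows "ev2 (D h) (\<lambda>u v. ev3 phii (\<lambda>a b c. ev2 (D v) (\<lambda>d e. C (S u * (S a * \<alpha> * b) * d) (c * e))))
       = ev3 phii (\<lambda>a b c. C (S a * \<alpha> * b) (h * c))"
proof -
  define T where "T p q r = C (S p * \<alpha> * q) r" for p q r
  have T: "trilin sc T" unfolding T_def
    by (intro trilin_linI lin_bilin1[OF C] lin_bilin2[OF C] klin_intros klin_S)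
  define g where "g v t = ev3 phii (\<lambda>a b c. C (S a * t * b) (v * c))" for v t
  have e1: "ev3 (tmul3 phii (id_D D (D h))) T =
     ev2 (D h) (\<lambda>u v. ev3 phii (\<lambda>a b c. ev2 (D v) (\<lambda>d e. C (S u * (S a * \<alpha> * b) * d) (c * e))))"
    by (simp add: ev3_tmul3 ev3_id_D T_def S_mult ev2_ev3_swap mult.assoc)
  have e2: "ev3 (tmul3 (D_id D (D h)) phii) T = ev2 (D h) (\<lambda>u v. ev2 (D u) (\<lambda>d e. g v (S d * \<alpha> * e)))"
    by (simp add: ev3_tmul3 ev3_D_id T_def g_def S_mult mult.assoc)
  have e3: "ev2 (D u) (\<lambda>d e. g v (S d * \<alpha> * e)) = eps u * g v \<alpha>" for u v
    by (rule anti1_lin) (unfold g_def, intro lin_ev3 lin_bilin1[OF C] klin_intros)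
  have e4: "ev2 (D h) (\<lambda>u v. eps u * g v \<alpha>) = g h \<alpha>"
    by (rule counitL_lin) (unfold g_def, intro lin_ev3 lin_bilin2[OF C] klin_intros)
  have "ev3 (tmul3 phii (id_D D (D h))) T = ev3 (tmul3 (D_id D (D h)) phii) T"
    using teq3D[OF qcoass_inv T] .
  then show ?thesis using e1 e2 e3 e4 by (simp add: g_def)
qed

lemma B_lem: assumes C: "bilin sc C"
  shows "ev3 phi (\<lambda>X1 X2 X3. ev3 phii (\<lambda>x1 x2 x3. ev2 (D X3) (\<lambda>d e.
            C (X1 * \<beta> * S X2 * (S x1 * \<alpha> * x2) * d) (x3 * e)))) = C 1 1"
proof -
  define F where "F u v w t = C (u * \<beta> * S v * \<alpha> * w) t" for u v w t
  have F: "quadlin sc F" unfolding F_def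
    by (intro quadlin_linI lin_bilin1[OF C] lin_bilin2[OF C] klin_intros klin_S)
  have z1: "ev4 (tmul4 (oneL phii) (id_id_D D phi)) F =
     ev3 phi (\<lambda>X1 X2 X3. ev3 phii (\<lambda>x1 x2 x3. ev2 (D X3) (\<lambda>d e.
            C (X1 * \<beta> * S X2 * (S x1 * \<alpha> * x2) * d) (x3 * e))))"
    apply (subst ev3_ev3_swap)
    apply (simp add: ev4_tmul4 ev4_oneL ev4_id_id_D F_def S_mult mult.assoc)
    done
  have z2: "ev4 (tmul4 (tmul4 (id_D_id D phi) (oneR phi)) (D_id_id D phii)) F =
     ev3 phi (\<lambda>Y1 Y2 Y3. ev2 (D Y2) (\<lambda>d e. ev3 phi (\<lambda>X1 X2 X3. ev3 phii (\<lambda>x1 x2 x3.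
        ev2 (D x1) (\<lambda>a b. C (Y1 * X1 * (a * \<beta> * S b) * S X2 * (S d * \<alpha> * e) * X3 * x2) (Y3 * x3))))))"
    by (simp add: ev4_tmul4 ev4_oneR ev4_id_D_id ev4_D_id_id F_def S_mult mult.assoc)
  have z3: "ev2 (D x1) (\<lambda>a b. C (Y1 * X1 * (a * \<beta> * S b) * S X2 * (S d * \<alpha> * e) * X3 * x2) (Y3 * x3))
      = eps x1 * C (Y1 * X1 * \<beta> * S X2 * (S d * \<alpha> * e) * X3 * x2) (Y3 * x3)" for x1 Y1 X1 X2 d e X3 x2 Y3 x3
    by (rule anti2_lin[where g = "\<lambda>t. C (Y1 * X1 * t * S X2 * (S d * \<alpha> * e) * X3 * x2) (Y3 * x3)", simplified])
      (intro lin_bilin1[OF C] klin_intros)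
  define g2 where "g2 Y1 Y3 t = ev3 phi (\<lambda>X1 X2 X3. ev3 phii (\<lambda>x1 x2 x3.
       eps x1 * C (Y1 * X1 * \<beta> * S X2 * t * X3 * x2) (Y3 * x3)))" for Y1 Y3 t
  have z4: "ev2 (D Y2) (\<lambda>d e. g2 Y1 Y3 (S d * \<alpha> * e)) = eps Y2 * g2 Y1 Y3 \<alpha>" for Y1 Y2 Y3
    by (rule anti1_lin) (unfold g2_def, intro lin_ev3 lin_cmult lin_bilin1[OF C] klin_intros)
  define g3 where "g3 Y1 Y3 t = ev3 phii (\<lambda>x1 x2 x3. eps x1 * C (Y1 * t * x2) (Y3 * x3))" for Y1 Y3 t
  have z5: "ev3 phi (\<lambda>X1 X2 X3. g3 Y1 Y3 (X1 * \<beta> * S X2 * \<alpha> * X3)) = g3 Y1 Y3 1" for Y1 Y3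
    by (rule anti3_lin) (unfold g3_def, intro lin_ev3 lin_cmult lin_bilin1[OF C] klin_intros)
  define K where "K p q = ev3 phii (\<lambda>x1 x2 x3. eps x1 * C (p * x2) (q * x3))" for p q
  have K: "bilin sc K" unfolding K_def
    by (intro bilin_linI lin_ev3 lin_cmult lin_bilin1[OF C] lin_bilin2[OF C] klin_intros)
  have "ev4 (tmul4 (tmul4 (id_D_id D phi) (oneR phi)) (D_id_id D phii)) F =
     ev3 phi (\<lambda>Y1 Y2 Y3. ev2 (D Y2) (\<lambda>d e. g2 Y1 Y3 (S d * \<alpha> * e)))"
    unfolding z2 z3 g2_def by simp
  also have "\<dots> = ev3 phi (\<lambda>Y1 Y2 Y3. eps Y2 * g2 Y1 Y3 \<alpha>)" by (simp only: z4)
  also have "\<dots> = ev3 phi (\<lambda>Y1 Y2 Y3. eps Y2 * ev3 phi (\<lambda>X1 X2 X3. g3 Y1 Y3 (X1 * \<beta> * S X2 * \<alpha> * X3)))"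
    by (simp add: g2_def g3_def mult.assoc)
  also have "\<dots> = ev3 phi (\<lambda>Y1 Y2 Y3. eps Y2 * K Y1 Y3)" by (simp only: z5) (simp add: g3_def K_def)
  also have "\<dots> = K 1 1" by (rule norm_form[OF K])
  also have "\<dots> = C 1 1" unfolding K_def by (simp add: epsL_phii[OF C])
  finally show ?thesis using teq4D[OF Zeq F] z1 by simp
qed

definition "Tsh C u v = ev3 phii (\<lambda>a b c. ev2 (D v) (\<lambda>d e. C (u * (S a * \<alpha> * b) * d) (c * e)))"

lemma TR_lem: assumes C: "bilin sc C"
  shows "ev3 phi (\<lambda>X1 X2 X3. ev2 (D y) (\<lambda>y1 y2. Tsh C (x * X1 * \<beta> * S (y1 * X2)) (y2 * X3))) = C x y"
proof -
  have dm: "ev2 (D (a * b)) (\<lambda>d e. C (P * d) (Q * e)) =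
      ev2 (D a) (\<lambda>d e. ev2 (D b) (\<lambda>d' e'. C (P * (d * d')) (Q * (e * e'))))" for P Q a b
    by (rule evD_mult) (intro bilin_linI lin_bilin1[OF C] lin_bilin2[OF C] klin_intros)
  define G where "G X1 X2 X3 p q = ev2 (D X3) (\<lambda>d' e'. C (x * X1 * \<beta> * S X2 * p * d') (q * e'))" for X1 X2 X3 p q
  have G: "bilin sc (G X1 X2 X3)" for X1 X2 X3 unfolding G_def
    by (intro bilin_linI lin_ev2 lin_bilin1[OF C] lin_bilin2[OF C] klin_intros)
  have s1: "ev2 (D y) (\<lambda>y1 y2. Tsh C (x * X1 * \<beta> * S (y1 * X2)) (y2 * X3)) =
      ev2 (D y) (\<lambda>u v. ev3 phii (\<lambda>a b c. ev2 (D v) (\<lambda>d e. G X1 X2 X3 (S u * (S a * \<alpha> * b) * d) (c * e))))"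
    for X1 X2 X3
    apply (simp only: Tsh_def dm)
    apply (simp add: G_def S_mult mult.assoc)
    done
  have s2: "ev3 phi (\<lambda>X1 X2 X3. ev3 phii (\<lambda>a b c. G X1 X2 X3 (S a * \<alpha> * b) (y * c))) = C x y"
  proof -
    have C': "bilin sc (\<lambda>p q. C (x * p) (y * q))"
      by (intro bilin_linI lin_bilin1[OF C] lin_bilin2[OF C] klin_intros)
    show ?thesis using B_lem[OF C'] by (simp add: G_def mult.assoc)
  qed
  show ?thesis using s2 by (simp add: s1 A_lem[OF G])
qed

end

section \<open>Finite-dimensional linear algebra\<close>

lemma (in vector_space) inj_on_imp_onto:
  assumes W: "subspace W" and G: "finite G" "W \<subseteq> span G"
    and f: "Vector_Spaces.linear scale scale f" and fW: "f ` W \<subseteq> W" and inj: "inj_on f W"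
    and w: "w \<in> W"
  shows "\<exists>v\<in>W. f v = w"
proof -
  obtain B where B: "B \<subseteq> W" "independent B" "W \<subseteq> span B" "card B = dim W"
    using basis_exists by blast
  have finB: "finite B" using independent_span_bound[OF G(1) B(2)] B(1) G(2) by blast
  have spB: "span B = W" using B(1,3) span_minimal[OF B(1) W] by blast
  interpret lf: Vector_Spaces.linear scale scale f by (rule f)
  have indf: "independent (f ` B)"
    by (rule lf.independent_injective_image[OF B(2)]) (use inj spB in simp)
  have cardf: "card (f ` B) = card B" using card_image inj_on_subset[OF inj B(1)] by blast
  have fBW: "f ` B \<subseteq> W" using B(1) fW by blast
  have "W \<subseteq> span (f ` B)"
  proof
    fix x assume xW: "x \<in> W"
    show "x \<in> span (f ` B)"
    proof (rule ccontr)
      assume nx: "x \<notin> span (f ` B)"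
      have ind: "independent (insert x (f ` B))" using independent_insertI[OF nx indf] .
      have "insert x (f ` B) \<subseteq> span B" using xW fBW spB by auto
      from independent_span_bound[OF finB ind this]
      have "card (insert x (f ` B)) \<le> card B" by simp
      moreover have "x \<notin> f ` B" using nx span_base by blast
      moreover have "finite (f ` B)" using finB by simp
      ultimately show False using cardf by simp
    qed
  qed
  then have "w \<in> span (f ` B)" using w by blast
  then have "w \<in> f ` span B" using lf.span_image by simp
  then show ?thesis using spB by auto
qed

lemma klin_sum_set:
  fixes f :: "'a::ab_group_add \<Rightarrow> 'b::ab_group_add"
  assumes f: "klin sa sb f" shows "f (sum g A) = sum (\<lambda>x. f (g x)) A"
  by (induct A rule: infinite_finite_induct) (auto simp: klin_zero[OF f] klin_add[OF f])

lemma sum_fun_apply2: "(sum F A) u v = sum (\<lambda>a. F a u v) A"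
  by (induct A rule: infinite_finite_induct) auto

definition sF :: "'k::field \<Rightarrow> ('q \<Rightarrow> 'q \<Rightarrow> 'k) \<Rightarrow> ('q \<Rightarrow> 'q \<Rightarrow> 'k)" where
  "sF c C = (\<lambda>u v. c * C u v)"

lemma vs_sF: "vector_space (sF :: 'k::field \<Rightarrow> ('q \<Rightarrow> 'q \<Rightarrow> 'k) \<Rightarrow> _)"
  by (unfold_locales) (auto simp: sF_def fun_eq_iff algebra_simps)

context kalg begin

lemma fin_basis:
  assumes "fin_dim sc"
  obtains Bq where "finite Bq" "module.independent sc Bq" "module.span sc Bq = UNIV"
proof -
  interpret V: vector_space sc by (rule vector_space_sc)
  obtain B where B: "finite B" "V.span B = UNIV" using assms by (auto simp: fin_dim_def)
  obtain A where A: "A \<subseteq> B" "V.independent A" "B \<subseteq> V.span A"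
    using V.maximal_independent_subset[of B] by blast
  have "V.span A = UNIV" using B(2) A(3) V.span_minimal[OF A(3)] by auto
  then show ?thesis using that finite_subset[OF A(1) B(1)] A(2) by blast
qed

lemma rep_klin:
  assumes "module.independent sc Bq" "module.span sc Bq = UNIV"
  shows "klin sc (*) (\<lambda>v. module.representation sc Bq v b)"
proof -
  interpret V: vector_space sc by (rule vector_space_sc)
  have "Vector_Spaces.linear sc (*) (\<lambda>v. V.representation Bq v b)"
    by (rule V.linear_representation[OF assms])
  then show ?thesis by (simp add: Vector_Spaces.linear_iff klin_def)
qed

lemma rep_sum:
  assumes "finite Bq" "module.independent sc Bq" "module.span sc Bq = UNIV"
  shows "(\<Sum>b\<in>Bq. sc (module.representation sc Bq v b) b) = v"
proof -
  interpret V: vector_space sc by (rule vector_space_sc)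
  show ?thesis by (rule V.sum_representation_eq) (use assms in auto)
qed

lemma separation:
  assumes fd: "fin_dim sc" and h: "\<And>f. klin sc (*) f \<Longrightarrow> f q = 0"
  shows "q = 0"
proof -
  obtain Bq where B: "finite Bq" "module.independent sc Bq" "module.span sc Bq = UNIV"
    using fin_basis[OF fd] by blast
  have "q = (\<Sum>b\<in>Bq. sc (module.representation sc Bq q b) b)" using rep_sum[OF B] by simp
  also have "\<dots> = 0" using h[OF rep_klin[OF B(2,3)]] by simp
  finally show ?thesis .
qed

lemma forms_onto:
  fixes T :: "('h \<Rightarrow> 'h \<Rightarrow> 'k) \<Rightarrow> ('h \<Rightarrow> 'h \<Rightarrow> 'k)"
  assumes fd: "fin_dim sc"
    and Tbil: "\<And>C. bilin sc C \<Longrightarrow> bilin sc (T C)"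
    and Tadd: "\<And>C C'. T (\<lambda>u v. C u v + C' u v) = (\<lambda>u v. T C u v + T C' u v)"
    and Tsc: "\<And>c C. T (\<lambda>u v. c * C u v) = (\<lambda>u v. c * T C u v)"
    and inj: "\<And>C. bilin sc C \<Longrightarrow> T C = (\<lambda>u v. 0) \<Longrightarrow> C = (\<lambda>u v. 0)"
    and Bb: "bilin sc B"
  shows "\<exists>C. bilin sc C \<and> T C = B"
proof -
  interpret F: vector_space "sF :: 'k \<Rightarrow> ('h \<Rightarrow> 'h \<Rightarrow> 'k) \<Rightarrow> _" by (rule vs_sF)
  obtain Bq where Bq: "finite Bq" "module.independent sc Bq" "module.span sc Bq = UNIV"
    using fin_basis[OF fd] by blast
  define rep where "rep v b = module.representation sc Bq v b" for v b
  have repl: "klin sc (*) (\<lambda>v. rep v b)" for b unfolding rep_def by (rule rep_klin[OF Bq(2,3)])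
  have reps: "(\<Sum>b\<in>Bq. sc (rep v b) b) = v" for v unfolding rep_def by (rule rep_sum[OF Bq])
  define E where "E p = (\<lambda>u v. rep u (fst p) * rep v (snd p))" for p
  define W where "W = {C :: 'h \<Rightarrow> 'h \<Rightarrow> 'k. bilin sc C}"
  have plus_eq: "C + C' = (\<lambda>u v. C u v + C' u v)" for C C' :: "'h \<Rightarrow> 'h \<Rightarrow> 'k"
    by (simp add: fun_eq_iff)
  have b0: "bilin sc (0 :: 'h \<Rightarrow> 'h \<Rightarrow> 'k)" by (intro bilinI) auto
  have badd: "bilin sc (C + C')" if C: "bilin sc C" and C': "bilin sc C'" for C C' :: "'h \<Rightarrow> 'h \<Rightarrow> 'k"
    unfolding plus_eq
    by (intro bilin_linI lin_add lin_bilin1[OF C] lin_bilin2[OF C] lin_bilin1[OF C'] lin_bilin2[OF C'] klin_idI)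
  have bsc: "bilin sc (sF c C)" if C: "bilin sc C" for C :: "'h \<Rightarrow> 'h \<Rightarrow> 'k" and c
    unfolding sF_def
    by (intro bilin_linI lin_cmult lin_bilin1[OF C] lin_bilin2[OF C] klin_idI)
  have subW: "F.subspace W"
    unfolding F.subspace_def W_def using b0 badd bsc by auto
  have spanW: "W \<subseteq> F.span (E ` (Bq \<times> Bq))"
  proof
    fix C assume "C \<in> W"
    then have C: "bilin sc C" by (simp add: W_def)
    have "C = (\<Sum>p\<in>Bq \<times> Bq. sF (C (fst p) (snd p)) (E p))"
    proof (rule ext, rule ext)
      fix u v
      have "C u v = C (\<Sum>b\<in>Bq. sc (rep u b) b) (\<Sum>b'\<in>Bq. sc (rep v b') b')" by (simp add: reps)
      also have "\<dots> = (\<Sum>b\<in>Bq. \<Sum>b'\<in>Bq. rep u b * rep v b' * C b b')"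
        by (simp add: klin_sum_set[OF lin_bilin1[OF C klin_idI]] klin_sum_set[OF lin_bilin2[OF C klin_idI]]
            bilin_sc1[OF C] bilin_sc2[OF C] sum_distrib_left mult.assoc mult.left_commute) (rule sum.swap)
      also have "\<dots> = (\<Sum>p\<in>Bq \<times> Bq. rep u (fst p) * rep v (snd p) * C (fst p) (snd p))"
        by (simp add: sum.cartesian_product case_prod_unfold)
      also have "\<dots> = (\<Sum>p\<in>Bq \<times> Bq. sF (C (fst p) (snd p)) (E p)) u v"
        by (simp add: sum_fun_apply2 sF_def E_def mult.commute mult.left_commute)
      finally show "C u v = (\<Sum>p\<in>Bq \<times> Bq. sF (C (fst p) (snd p)) (E p)) u v" .
    qed
    also have "\<dots> \<in> F.span (E ` (Bq \<times> Bq))"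
      by (intro F.span_sum F.span_scale F.span_base) auto
    finally show "C \<in> F.span (E ` (Bq \<times> Bq))" .
  qed
  have lin: "Vector_Spaces.linear sF sF T"
    unfolding Vector_Spaces.linear_iff
  proof (intro conjI allI)
    show "vector_space (sF :: 'k \<Rightarrow> ('h \<Rightarrow> 'h \<Rightarrow> 'k) \<Rightarrow> _)" by (rule vs_sF)
    show "vector_space (sF :: 'k \<Rightarrow> ('h \<Rightarrow> 'h \<Rightarrow> 'k) \<Rightarrow> _)" by (rule vs_sF)
    show "T (x + y) = T x + T y" for x y using Tadd[of x y] by (simp add: plus_eq)
    show "T (sF c x) = sF c (T x)" for c x using Tsc[of c x] by (simp add: sF_def)
  qed
  have TW: "T ` W \<subseteq> W" using Tbil by (auto simp: W_def)
  have injW: "inj_on T W"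
  proof (rule inj_onI)
    fix C C' assume CW: "C \<in> W" "C' \<in> W" and eq: "T C = T C'"
    have C: "bilin sc C" and C': "bilin sc C'" using CW by (auto simp: W_def)
    let ?D = "\<lambda>u v. C u v + (- 1) * C' u v"
    have D: "bilin sc ?D"
      by (intro bilin_linI lin_add lin_cmult lin_bilin1[OF C] lin_bilin2[OF C] lin_bilin1[OF C'] lin_bilin2[OF C'] klin_idI)
    have "T ?D = (\<lambda>u v. T C u v + (- 1) * T C' u v)"
      using Tadd[of C "\<lambda>u v. (- 1) * C' u v"] Tsc[of "- 1" C'] by simp
    also have "\<dots> = (\<lambda>u v. 0)" using eq by simp
    finally have "?D = (\<lambda>u v. 0)" using inj[OF D] by simp
    then show "C = C'" by (auto simp: fun_eq_iff dest!: fun_cong)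
  qed
  obtain C where "C \<in> W" "T C = B"
    using F.inj_on_imp_onto[OF subW _ spanW lin TW injW] Bb Bq(1) by (auto simp: W_def)
  then show ?thesis by (auto simp: W_def)
qed

end

lemma klin_diff:
  fixes f :: "'a::ab_group_add \<Rightarrow> 'b::ab_group_add"
  shows "klin sa sb f \<Longrightarrow> f (x - y) = f x - f y"
  using klin_add[of sa sb f "x - y" y] by (simp add: eq_diff_eq)

lemma ev2_zero[simp]: "ev2 xs (\<lambda>a b. 0 :: 'k::comm_monoid_add) = 0" by (induct xs) auto
lemma ev3_zero[simp]: "ev3 xs (\<lambda>a b c. 0 :: 'k::comm_monoid_add) = 0" by (induct xs) auto

locale qsetting =
  H: qhopf scH DH epsH phiH phiiH S \<alpha> \<beta> + Q: qba scQ DQ epsQ phiQ phiiQ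
  for scH :: "'k::field \<Rightarrow> 'h::ring_1 \<Rightarrow> 'h" and DH epsH phiH phiiH S \<alpha> \<beta>
  and scQ :: "'k \<Rightarrow> 'q::ring_1 \<Rightarrow> 'q" and DQ epsQ phiQ phiiQ +
  fixes \<nu> :: "'h \<Rightarrow> 'q"
  assumes mor: "qba_morphism scH DH epsH phiH scQ DQ epsQ phiQ \<nu>"
    and surj: "surj \<nu>" and fin: "fin_dim scQ"
begin

lemma nu_alg: "alg_map scH scQ \<nu>" using mor by (simp add: qba_morphism_def)
lemma nu_klin: "klin scH scQ \<nu>" using nu_alg by (simp add: alg_map_def)
lemma nu_add[simp]: "\<nu> (x + y) = \<nu> x + \<nu> y" using nu_klin by (simp add: klin_def)
lemma nu_sc[simp]: "\<nu> (scH c x) = scQ c (\<nu> x)" using nu_klin by (simp add: klin_def)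
lemma nu_mult[simp]: "\<nu> (x * y) = \<nu> x * \<nu> y" using nu_alg by (simp add: alg_map_def)
lemma nu_one[simp]: "\<nu> 1 = 1" using nu_alg by (simp add: alg_map_def)
lemma nu_diff: "\<nu> (x - y) = \<nu> x - \<nu> y" using klin_diff[OF nu_klin] .
lemma DQ_nu: "teq2 scQ (DQ (\<nu> h)) (map (\<lambda>(a, b). (\<nu> a, \<nu> b)) (DH h))" using mor by (simp add: qba_morphism_def)
lemma eps_nu[simp]: "epsQ (\<nu> h) = epsH h" using mor by (simp add: qba_morphism_def)
lemma phi_nu: "teq3 scQ (map (\<lambda>(a, b, c). (\<nu> a, \<nu> b, \<nu> c)) phiH) phiQ" using mor by (simp add: qba_morphism_def)

lemma klin_nuf: "klin scQ (*) f \<Longrightarrow> klin scH (*) (\<lambda>x. f (\<nu> x))"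
  using klin_comp[OF nu_klin] .
lemma klin_nuf2: "klin scH scH g \<Longrightarrow> klin scQ (*) f \<Longrightarrow> klin scH (*) (\<lambda>x. f (\<nu> (g x)))"
  using klin_comp[OF klin_comp[OF _ nu_klin]] .

lemma bilin_nu: assumes C: "bilin scQ C" shows "bilin scH (\<lambda>a b. C (\<nu> a) (\<nu> b))"
  by (intro bilin_linI klin_nuf lin_bilin1[OF C] lin_bilin2[OF C] Q.klin_idI)

lemma evDQ_nu: assumes B: "bilin scQ B" shows "ev2 (DQ (\<nu> h)) B = ev2 (DH h) (\<lambda>a b. B (\<nu> a) (\<nu> b))"
  using teq2D[OF DQ_nu B] by (simp add: ev2_map case_prod_unfold ev2_def comp_def)

definition TQ :: "('q \<Rightarrow> 'q \<Rightarrow> 'k) \<Rightarrow> 'q \<Rightarrow> 'q \<Rightarrow> 'k" where "TQ C u v = ev3 phiiH (\<lambda>a b c. ev2 (DQ v) (\<lambda>d e. C (u * \<nu> (S a * \<alpha> * b) * d) (\<nu> c * e)))"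

lemma TQ_nu: assumes C: "bilin scQ C" shows "TQ C (\<nu> u) (\<nu> v) = H.Tsh (\<lambda>p q. C (\<nu> p) (\<nu> q)) u v"
proof -
  have i: "bilin scQ (\<lambda>d e. C (P * d) (R * e))" for P R
    by (intro bilin_linI lin_bilin1[OF C] lin_bilin2[OF C] Q.klin_intros)
  show ?thesis unfolding TQ_def H.Tsh_def by (simp add: evDQ_nu[OF i])
qed

lemma TQ_bil: assumes C: "bilin scQ C" shows "bilin scQ (TQ C)"
proof -
  have i: "bilin scQ (\<lambda>d e. C (P * d) (R * e))" for P R
    by (intro bilin_linI lin_bilin1[OF C] lin_bilin2[OF C] Q.klin_intros)
  show ?thesis unfolding TQ_def
    by (intro bilin_linI lin_ev3 Q.lin_D[OF i] lin_ev2 lin_bilin1[OF C] Q.klin_intros)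
qed

lemma TQ_add: "TQ (\<lambda>u v. C u v + C' u v) = (\<lambda>u v. TQ C u v + TQ C' u v)"
  by (rule ext, rule ext) (simp add: TQ_def ev2_add_form ev3_add_form)
lemma TQ_sc: "TQ (\<lambda>u v. c * C u v) = (\<lambda>u v. c * TQ C u v)"
  by (rule ext, rule ext) (simp add: TQ_def ev2_mult_form ev3_mult_form)

lemma TQ_inj: assumes C: "bilin scQ C" and T0: "TQ C = (\<lambda>u v. 0)" shows "C = (\<lambda>u v. 0)"
proof (rule ext, rule ext)
  fix u v
  obtain x y where xy: "u = \<nu> x" "v = \<nu> y" using surj by (metis surjD)
  have "C u v = ev3 phiH (\<lambda>X1 X2 X3. ev2 (DH y) (\<lambda>y1 y2.
      H.Tsh (\<lambda>p q. C (\<nu> p) (\<nu> q)) (x * X1 * \<beta> * S (y1 * X2)) (y2 * X3)))"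
    using H.TR_lem[OF bilin_nu[OF C]] xy by simp
  also have "\<dots> = 0" by (simp add: TQ_nu[OF C, symmetric] T0)
  finally show "C u v = 0" .
qed

lemma ker_S: assumes i: "\<nu> i = 0" shows "\<nu> (S i) = 0"
proof -
  have key: "ev2 (DH i) (\<lambda>u v. B (\<nu> (S u)) (\<nu> v)) = 0" if B: "bilin scQ B" for B
  proof -
    have "\<exists>C. bilin scQ C \<and> TQ C = B"
      apply (rule Q.forms_onto[OF fin, where T = TQ])
          apply (erule TQ_bil)
         apply (rule TQ_add)
        apply (rule TQ_sc)
       apply (erule (1) TQ_inj)
      apply (rule B)
      done
    then obtain C where C: "bilin scQ C" and TC: "TQ C = B" by blast
    have "ev2 (DH i) (\<lambda>u v. B (\<nu> (S u)) (\<nu> v)) = ev2 (DH i) (\<lambda>u v. H.Tsh (\<lambda>p q. C (\<nu> p) (\<nu> q)) (S u) v)"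
      by (simp add: TC[symmetric] TQ_nu[OF C])
    also have "\<dots> = ev3 phiiH (\<lambda>a b c. C (\<nu> (S a * \<alpha> * b)) (\<nu> (i * c)))"
      unfolding H.Tsh_def by (rule H.A_lem[OF bilin_nu[OF C]])
    also have "\<dots> = 0"
    proof -
      have z: "C p 0 = 0" for p using klin_zero[OF lin_bilin2[OF C Q.klin_idI]] by simp
      show ?thesis using i by (simp add: z)
    qed
    finally show ?thesis .
  qed
  show ?thesis
  proof (rule Q.separation[OF fin])
    fix f assume f: "klin scQ (*) f"
    have B: "bilin scQ (\<lambda>p q. f p * epsQ q)"
      by (intro bilin_linI lin_multc lin_cmult f Q.eps_klin)
    have "f (\<nu> (S i)) = ev2 (DH i) (\<lambda>u v. epsH v * f (\<nu> (S u)))"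
      by (rule H.counitR_lin[symmetric]) (intro klin_nuf2 H.S_klin f)
    also have "\<dots> = ev2 (DH i) (\<lambda>u v. f (\<nu> (S u)) * epsQ (\<nu> v))" by (simp add: mult.commute)
    also have "\<dots> = 0" by (rule key[OF B])
    finally show "f (\<nu> (S i)) = 0" .
  qed
qed

end

context qsetting begin

lemma anti4_lin: assumes g: "klin scH (*) g" shows "ev3 phiiH (\<lambda>a b c. g (S a * \<alpha> * b * \<beta> * S c)) = g 1"
proof -
  have "g 1 = g (sum_list (map (\<lambda>(a, b, c). S a * \<alpha> * b * \<beta> * S c) phiiH))" by (simp add: H.anti4)
  also have "\<dots> = ev3 phiiH (\<lambda>a b c. g (S a * \<alpha> * b * \<beta> * S c))"
    by (simp add: klin_sum_list[OF g] ev3_def case_prod_unfold)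
  finally show ?thesis by simp
qed

definition "Sbar q = \<nu> (S (SOME h. \<nu> h = q))"

lemma Sbar_nu[simp]: "Sbar (\<nu> h) = \<nu> (S h)"
proof -
  let ?h = "SOME h'. \<nu> h' = \<nu> h"
  have "\<nu> ?h = \<nu> h" by (rule someI) (rule refl)
  then have "\<nu> (?h - h) = 0" by (simp add: nu_diff)
  then have "\<nu> (S (?h - h)) = 0" by (rule ker_S)
  then show ?thesis by (simp add: Sbar_def klin_diff[OF H.S_klin] nu_diff)
qed

lemma sep2: assumes "\<And>f. klin scQ (*) f \<Longrightarrow> f x = f y" shows "x = y"
proof -
  have "x - y = 0"
    by (rule Q.separation[OF fin]) (simp add: klin_diff assms)
  then show ?thesis by simp
qed

lemma Sbar_klin: "klin scQ scQ Sbar"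
proof (rule klinI)
  fix x y
  obtain a b where "x = \<nu> a" "y = \<nu> b" using surj by (metis surjD)
  then show "Sbar (x + y) = Sbar x + Sbar y"
    by (simp add: nu_add[symmetric] klin_add[OF H.S_klin] del: nu_add)
next
  fix c x
  obtain a where "x = \<nu> a" using surj by (metis surjD)
  then show "Sbar (scQ c x) = scQ c (Sbar x)"
    by (simp add: nu_sc[symmetric] klin_sc[OF H.S_klin] del: nu_sc)
qed

lemma Sbar_anti: "anti_alg_map scQ scQ Sbar"
proof -
  have m: "Sbar (x * y) = Sbar y * Sbar x" for x y
  proof -
    obtain a b where "x = \<nu> a" "y = \<nu> b" using surj by (metis surjD)
    then show ?thesis by (simp add: nu_mult[symmetric] H.S_mult del: nu_mult)
  qed
  have o: "Sbar 1 = 1" using Sbar_nu[of 1] by (simp add: H.S_one)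
  show ?thesis using Sbar_klin m o by (simp add: anti_alg_map_def)
qed

lemma klin_Sbar: "klin scQ scQ f \<Longrightarrow> klin scQ scQ (\<lambda>x. Sbar (f x))"
  using klin_comp[OF _ Sbar_klin] .

lemma qa1: "sum_list (map (\<lambda>(a, b). Sbar a * \<nu> \<alpha> * b) (DQ q)) = scQ (epsQ q) (\<nu> \<alpha>)"
proof -
  obtain h where q: "q = \<nu> h" using surj by (metis surjD)
  show ?thesis
  proof (rule sep2)
    fix f assume f: "klin scQ (*) f"
    have B: "bilin scQ (\<lambda>a b. f (Sbar a * \<nu> \<alpha> * b))"
      by (intro bilin_linI klin_comp[OF _ f] Q.klin_intros klin_Sbar)
    have "f (sum_list (map (\<lambda>(a, b). Sbar a * \<nu> \<alpha> * b) (DQ q))) = ev2 (DQ (\<nu> h)) (\<lambda>a b. f (Sbar a * \<nu> \<alpha> * b))"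
      by (simp add: klin_sum_list[OF f] ev2_def case_prod_unfold q)
    also have "\<dots> = ev2 (DH h) (\<lambda>a b. f (\<nu> (S a * \<alpha> * b)))" by (simp add: evDQ_nu[OF B])
    also have "\<dots> = epsH h * f (\<nu> \<alpha>)" by (rule H.anti1_lin) (rule klin_nuf[OF f])
    also have "\<dots> = f (scQ (epsQ q) (\<nu> \<alpha>))" by (simp add: klin_sc[OF f] q)
    finally show "f (sum_list (map (\<lambda>(a, b). Sbar a * \<nu> \<alpha> * b) (DQ q))) = f (scQ (epsQ q) (\<nu> \<alpha>))" .
  qed
qed

lemma qa2: "sum_list (map (\<lambda>(a, b). a * \<nu> \<beta> * Sbar b) (DQ q)) = scQ (epsQ q) (\<nu> \<beta>)"
proof -
  obtain h where q: "q = \<nu> h" using surj by (metis surjD)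
  show ?thesis
  proof (rule sep2)
    fix f assume f: "klin scQ (*) f"
    have B: "bilin scQ (\<lambda>a b. f (a * \<nu> \<beta> * Sbar b))"
      by (intro bilin_linI klin_comp[OF _ f] Q.klin_intros klin_Sbar)
    have "f (sum_list (map (\<lambda>(a, b). a * \<nu> \<beta> * Sbar b) (DQ q))) = ev2 (DQ (\<nu> h)) (\<lambda>a b. f (a * \<nu> \<beta> * Sbar b))"
      by (simp add: klin_sum_list[OF f] ev2_def case_prod_unfold q)
    also have "\<dots> = ev2 (DH h) (\<lambda>a b. f (\<nu> (a * \<beta> * S b)))" by (simp add: evDQ_nu[OF B])
    also have "\<dots> = epsH h * f (\<nu> \<beta>)" by (rule H.anti2_lin) (rule klin_nuf[OF f])
    also have "\<dots> = f (scQ (epsQ q) (\<nu> \<beta>))" by (simp add: klin_sc[OF f] q)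
    finally show "f (sum_list (map (\<lambda>(a, b). a * \<nu> \<beta> * Sbar b) (DQ q))) = f (scQ (epsQ q) (\<nu> \<beta>))" .
  qed
qed

definition "nu3 xs = map (\<lambda>(a, b, c). (\<nu> a, \<nu> b, \<nu> c)) xs"

lemma ev3_nu3: "ev3 (nu3 xs) T = ev3 xs (\<lambda>a b c. T (\<nu> a) (\<nu> b) (\<nu> c))"
  by (induct xs) (auto simp: nu3_def)

lemma nu3_cong: assumes "teq3 scH xs ys" shows "teq3 scQ (nu3 xs) (nu3 ys)"
proof -
  have "ev3 (nu3 xs) T = ev3 (nu3 ys) T" if T: "trilin scQ T" for T
  proof -
    have "trilin scH (\<lambda>a b c. T (\<nu> a) (\<nu> b) (\<nu> c))"
      by (intro trilin_linI klin_nuf lin_trilin1[OF T] lin_trilin2[OF T] lin_trilin3[OF T] Q.klin_idI)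
    then show ?thesis using teq3D[OF assms] by (simp add: ev3_nu3)
  qed
  then show ?thesis by (simp add: teq3_iff)
qed

lemma nu3_mult: "tmul3 (nu3 xs) (nu3 ys) = nu3 (tmul3 xs ys)"
  by (induct xs) (auto simp: nu3_def tmul3_def case_prod_unfold)

lemma phii_nu: "teq3 scQ (nu3 phiiH) phiiQ"
proof -
  have pn: "teq3 scQ (nu3 phiH) phiQ" using phi_nu by (simp add: nu3_def)
  have one: "teq3 scQ (tmul3 (nu3 phiH) (nu3 phiiH)) [(1, 1, 1)]"
  proof -
    have n1: "nu3 [(1, 1, 1)] = [(1, 1, 1)]" by (simp add: nu3_def)
    show ?thesis using nu3_cong[OF H.phi_inv1] by (simp only: nu3_mult n1)
  qed
  have "teq3 scQ (nu3 phiiH) (tmul3 (tmul3 phiiQ phiQ) (nu3 phiiH))"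
    using Q.tmul3_cong1[OF teq3_sym[OF Q.phi_inv2], of "nu3 phiiH"] by simp
  also have "teq3 scQ \<dots> (tmul3 (tmul3 phiiQ (nu3 phiH)) (nu3 phiiH))"
    by (intro Q.tmul3_cong1 Q.tmul3_cong2 teq3_sym[OF pn])
  also have "tmul3 (tmul3 phiiQ (nu3 phiH)) (nu3 phiiH) = tmul3 phiiQ (tmul3 (nu3 phiH) (nu3 phiiH))"
    by (simp add: tmul3_assoc)
  also have "teq3 scQ \<dots> (tmul3 phiiQ [(1, 1, 1)])" by (rule Q.tmul3_cong2[OF one])
  finally show ?thesis by simp
qed

lemma qa3: "sum_list (map (\<lambda>(a, b, c). a * \<nu> \<beta> * Sbar b * \<nu> \<alpha> * c) phiQ) = 1"
proof (rule sep2)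
  fix f assume f: "klin scQ (*) f"
  have T: "trilin scQ (\<lambda>a b c. f (a * \<nu> \<beta> * Sbar b * \<nu> \<alpha> * c))"
    by (intro trilin_linI klin_comp[OF _ f] Q.klin_intros klin_Sbar)
  have pn: "teq3 scQ (nu3 phiH) phiQ" using phi_nu by (simp add: nu3_def)
  have "f (sum_list (map (\<lambda>(a, b, c). a * \<nu> \<beta> * Sbar b * \<nu> \<alpha> * c) phiQ)) =
      ev3 phiQ (\<lambda>a b c. f (a * \<nu> \<beta> * Sbar b * \<nu> \<alpha> * c))"
    by (simp add: klin_sum_list[OF f] ev3_def case_prod_unfold)
  also have "\<dots> = ev3 (nu3 phiH) (\<lambda>a b c. f (a * \<nu> \<beta> * Sbar b * \<nu> \<alpha> * c))"
    using teq3D[OF pn T] by simp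
  also have "\<dots> = ev3 phiH (\<lambda>a b c. f (\<nu> (a * \<beta> * S b * \<alpha> * c)))" by (simp add: ev3_nu3)
  also have "\<dots> = f (\<nu> 1)" by (rule H.anti3_lin) (rule klin_nuf[OF f])
  finally show "f (sum_list (map (\<lambda>(a, b, c). a * \<nu> \<beta> * Sbar b * \<nu> \<alpha> * c) phiQ)) = f 1" by simp
qed

lemma qa4: "sum_list (map (\<lambda>(a, b, c). Sbar a * \<nu> \<alpha> * b * \<nu> \<beta> * Sbar c) phiiQ) = 1"
proof (rule sep2)
  fix f assume f: "klin scQ (*) f"
  have T: "trilin scQ (\<lambda>a b c. f (Sbar a * \<nu> \<alpha> * b * \<nu> \<beta> * Sbar c))"
    by (intro trilin_linI klin_comp[OF _ f] Q.klin_intros klin_Sbar)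
  have "f (sum_list (map (\<lambda>(a, b, c). Sbar a * \<nu> \<alpha> * b * \<nu> \<beta> * Sbar c) phiiQ)) =
      ev3 phiiQ (\<lambda>a b c. f (Sbar a * \<nu> \<alpha> * b * \<nu> \<beta> * Sbar c))"
    by (simp add: klin_sum_list[OF f] ev3_def case_prod_unfold)
  also have "\<dots> = ev3 (nu3 phiiH) (\<lambda>a b c. f (Sbar a * \<nu> \<alpha> * b * \<nu> \<beta> * Sbar c))"
    using teq3D[OF phii_nu T] by simp
  also have "\<dots> = ev3 phiiH (\<lambda>a b c. f (\<nu> (S a * \<alpha> * b * \<beta> * S c)))" by (simp add: ev3_nu3)
  also have "\<dots> = f (\<nu> 1)" by (rule anti4_lin) (rule klin_nuf[OF f])
  finally show "f (sum_list (map (\<lambda>(a, b, c). Sbar a * \<nu> \<alpha> * b * \<nu> \<beta> * Sbar c) phiiQ)) = f 1" by simp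
qed

lemma main:
  "(\<forall>x. \<nu> x = 0 \<longrightarrow> \<nu> (S x) = 0) \<and>
   (\<exists>Sb. anti_alg_map scQ scQ Sb \<and> (\<forall>h. Sb (\<nu> h) = \<nu> (S h)) \<and>
        quasi_antipode scQ DQ epsQ phiQ phiiQ Sb (\<nu> \<alpha>) (\<nu> \<beta>) \<and>
        qhopf_morphism scH DH epsH phiH S \<alpha> \<beta> scQ DQ epsQ phiQ Sb (\<nu> \<alpha>) (\<nu> \<beta>) \<nu>)"
proof (intro conjI exI allI impI)
  show "\<nu> x = 0 \<Longrightarrow> \<nu> (S x) = 0" for x by (rule ker_S)
  show "anti_alg_map scQ scQ Sbar" by (rule Sbar_anti)
  show "Sbar (\<nu> h) = \<nu> (S h)" for h by simp
  show "quasi_antipode scQ DQ epsQ phiQ phiiQ Sbar (\<nu> \<alpha>) (\<nu> \<beta>)"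
    unfolding quasi_antipode_def using Sbar_anti qa1 qa2 qa3 qa4 by blast
  show "qhopf_morphism scH DH epsH phiH S \<alpha> \<beta> scQ DQ epsQ phiQ Sbar (\<nu> \<alpha>) (\<nu> \<beta>) \<nu>"
    unfolding qhopf_morphism_def using mor by simp
qed

end

theorem theorem2p1:
  fixes scH :: "'k::field \<Rightarrow> 'h::ring_1 \<Rightarrow> 'h"
    and DH :: "'h \<Rightarrow> ('h \<times> 'h) list" and epsH :: "'h \<Rightarrow> 'k"
    and phiH phiiH :: "('h \<times> 'h \<times> 'h) list"
    and S :: "'h \<Rightarrow> 'h" and \<alpha> \<beta> :: 'h
    and scQ :: "'k \<Rightarrow> 'q::ring_1 \<Rightarrow> 'q"
    and DQ :: "'q \<Rightarrow> ('q \<times> 'q) list" and epsQ :: "'q \<Rightarrow> 'k"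
    and phiQ phiiQ :: "('q \<times> 'q \<times> 'q) list"
    and \<nu> :: "'h \<Rightarrow> 'q"
  assumes H: "quasi_hopf scH DH epsH phiH phiiH S \<alpha> \<beta>"
    and Q: "quasibialgebra scQ DQ epsQ phiQ phiiQ"
    and Qfin: "fin_dim scQ"
    and mor: "qba_morphism scH DH epsH phiH scQ DQ epsQ phiQ \<nu>"
    and surj: "surj \<nu>"
  shows "(\<forall>x. \<nu> x = 0 \<longrightarrow> \<nu> (S x) = 0) \<and>
         (\<exists>Sbar. anti_alg_map scQ scQ Sbar \<and> (\<forall>h. Sbar (\<nu> h) = \<nu> (S h)) \<and>
                 quasi_antipode scQ DQ epsQ phiQ phiiQ Sbar (\<nu> \<alpha>) (\<nu> \<beta>) \<and>
                 qhopf_morphism scH DH epsH phiH S \<alpha> \<beta> scQ DQ epsQ phiQ Sbar (\<nu> \<alpha>) (\<nu> \<beta>) \<nu>)"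
proof -
  have Hq: "quasibialgebra scH DH epsH phiH phiiH" and Ha: "quasi_antipode scH DH epsH phiH phiiH S \<alpha> \<beta>"
    using H by (simp_all add: quasi_hopf_def)
  interpret qsetting scH DH epsH phiH phiiH S \<alpha> \<beta> scQ DQ epsQ phiQ phiiQ \<nu>
  proof (unfold_locales)
    show "kalgebra scH" using Hq by (simp add: quasibialgebra_def)
    show "quasibialgebra scH DH epsH phiH phiiH" by (rule Hq)
    show "quasi_antipode scH DH epsH phiH phiiH S \<alpha> \<beta>" by (rule Ha)
    show "kalgebra scQ" using Q by (simp add: quasibialgebra_def)
    show "quasibialgebra scQ DQ epsQ phiQ phiiQ" by (rule Q)
  qed (fact mor surj Qfin)+
  show ?thesis by (rule main)
qed

end
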